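(* Let $0<r<1$ and let $\underline{T}=(T_1,\dots,T_d)$ be a tuple of invertible operators on a Hilbert space $\mathcal H$. Then $\underline{T}$ is a doubly commuting tuple of operators in $QA_r$ if and only if there exist a tuple $(U_1,\dots,U_d)$ of commuting unitaries and a tuple $(D_1,\dots,D_d)$ of commuting self-adjoint operators on $\mathcal H$ such that $\sigma(D_j)\subseteq\overline{A_r}$ for each $j$, $D_iU_j=U_jD_i$ for $1\le i,j\le d$ with $i\ne j$, and $T_j=U_jD_j$ for $1\le j\le d$.
   Context: $QA_r=\{T: T\text{ invertible},\ \|rT\|\le1,\ \|rT^{-1}\|\le1\}$. $A_r=\{z\in\mathbb C: r<|z|<r^{-1}\}$ and $\overline{A_r}$ is its closure. A tuple is doubly commuting if $T_iT_j=T_jT_i$ for all $i,j$ and $T_iT_j^*=T_j^*T_i$ for $i\ne j$. *)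

theory Defs
  imports "HOL-Analysis.Analysis"
begin

class chilbert_space = banach +
  fixes scaleC :: "complex \<Rightarrow> 'a \<Rightarrow> 'a"
    and cinner :: "'a \<Rightarrow> 'a \<Rightarrow> complex"
  assumes scaleC_scaleR: "scaleC (of_real t) x = scaleR t x"
    and scaleC_add_right: "scaleC a (x + y) = scaleC a x + scaleC a y"
    and scaleC_add_left: "scaleC (a + b) x = scaleC a x + scaleC b x"
    and scaleC_scaleC: "scaleC a (scaleC b x) = scaleC (a * b) x"
    and scaleC_one: "scaleC 1 x = x"
    and cinner_commute: "cinner x y = cnj (cinner y x)"
    and cinner_add_left: "cinner (x + y) z = cinner x z + cinner y z"
    and cinner_scaleC_left: "cinner (scaleC a x) y = cnj a * cinner x y"
    and cinner_self_norm: "cinner x x = complex_of_real ((norm x)\<^sup>2)"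

definition clinear_op :: "('a::chilbert_space \<Rightarrow> 'a) \<Rightarrow> bool" where
  "clinear_op T \<longleftrightarrow> (\<forall>x y. T (x + y) = T x + T y) \<and> (\<forall>c x. T (scaleC c x) = scaleC c (T x))"

definition bounded_op :: "('a::chilbert_space \<Rightarrow> 'a) \<Rightarrow> bool" where
  "bounded_op T \<longleftrightarrow> clinear_op T \<and> (\<exists>K. \<forall>x. norm (T x) \<le> norm x * K)"

definition adj :: "('a::chilbert_space \<Rightarrow> 'a) \<Rightarrow> ('a \<Rightarrow> 'a)" where
  "adj T = (SOME S. bounded_op S \<and> (\<forall>x y. cinner (T x) y = cinner x (S y)))"

definition op_invertible :: "('a::chilbert_space \<Rightarrow> 'a) \<Rightarrow> bool" where
  "op_invertible T \<longleftrightarrow> bounded_op T \<and> (\<exists>S. bounded_op S \<and> S \<circ> T = id \<and> T \<circ> S = id)"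

definition op_spectrum :: "('a::chilbert_space \<Rightarrow> 'a) \<Rightarrow> complex set" where
  "op_spectrum T = {c. \<not> op_invertible (\<lambda>x. T x - scaleC c x)}"

definition unitary_op :: "('a::chilbert_space \<Rightarrow> 'a) \<Rightarrow> bool" where
  "unitary_op U \<longleftrightarrow> bounded_op U \<and> adj U \<circ> U = id \<and> U \<circ> adj U = id"

definition selfadjoint_op :: "('a::chilbert_space \<Rightarrow> 'a) \<Rightarrow> bool" where
  "selfadjoint_op D \<longleftrightarrow> bounded_op D \<and> adj D = D"

definition QA :: "real \<Rightarrow> ('a::chilbert_space \<Rightarrow> 'a) set" where
  "QA r = {T. op_invertible T \<and> onorm (\<lambda>x. r *\<^sub>R T x) \<le> 1 \<and> onorm (\<lambda>x. r *\<^sub>R inv T x) \<le> 1}"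

definition annulus :: "real \<Rightarrow> complex set" where
  "annulus r = {z. r < cmod z \<and> cmod z < 1 / r}"

definition commuting_tuple :: "nat \<Rightarrow> (nat \<Rightarrow> ('a \<Rightarrow> 'a)) \<Rightarrow> bool" where
  "commuting_tuple d T \<longleftrightarrow> (\<forall>i\<in>{1..d}. \<forall>j\<in>{1..d}. T i \<circ> T j = T j \<circ> T i)"

definition doubly_commuting :: "nat \<Rightarrow> (nat \<Rightarrow> ('a::chilbert_space \<Rightarrow> 'a)) \<Rightarrow> bool" where
  "doubly_commuting d T \<longleftrightarrow> commuting_tuple d T \<and>
     (\<forall>i\<in>{1..d}. \<forall>j\<in>{1..d}. i \<noteq> j \<longrightarrow> T i \<circ> adj (T j) = adj (T j) \<circ> T i)"

end

theory Submission
  imports Defs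
begin


lemma scaleC_zero_left[simp]: "scaleC 0 (x::'a::chilbert_space) = 0"
  using scaleC_scaleR[of 0 x] by simp

lemma scaleC_zero_right[simp]: "scaleC c (0::'a::chilbert_space) = 0"
  using scaleC_add_right[of c "0::'a" 0] by simp

lemma scaleC_minus_left: "scaleC (-c) (x::'a::chilbert_space) = - scaleC c x"
  using scaleC_add_left[of c "-c" x] by (simp add: eq_neg_iff_add_eq_0 add.commute)

lemma scaleC_minus_right: "scaleC c (-x::'a::chilbert_space) = - scaleC c x"
  using scaleC_add_right[of c x "-x"] by (simp add: eq_neg_iff_add_eq_0 add.commute)

lemma scaleC_diff_right: "scaleC c (x - y::'a::chilbert_space) = scaleC c x - scaleC c y"
  using scaleC_add_right[of c x "-y"] scaleC_minus_right[of c y] by simp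

lemma scaleC_diff_left: "scaleC (a - b) (x::'a::chilbert_space) = scaleC a x - scaleC b x"
  using scaleC_add_left[of a "-b" x] scaleC_minus_left[of b x] by simp

lemma scaleC_real: "scaleC (complex_of_real t) (x::'a::chilbert_space) = t *\<^sub>R x"
  by (rule scaleC_scaleR)

lemma scaleC_scaleR_comm: "scaleC c (t *\<^sub>R (x::'a::chilbert_space)) = t *\<^sub>R scaleC c x"
  by (metis scaleC_scaleR scaleC_scaleC mult.commute)

lemma cinner_zero_left[simp]: "cinner 0 (y::'a::chilbert_space) = 0"
  using cinner_add_left[of "0::'a" 0 y] by simp

lemma cinner_add_right: "cinner (x::'a::chilbert_space) (y + z) = cinner x y + cinner x z"
  by (metis cinner_commute cinner_add_left complex_cnj_add)

lemma cinner_scaleC_right: "cinner (x::'a::chilbert_space) (scaleC a y) = a * cinner x y"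
  by (metis cinner_commute cinner_scaleC_left complex_cnj_cnj complex_cnj_mult)

lemma cinner_zero_right[simp]: "cinner (x::'a::chilbert_space) 0 = 0"
  using cinner_add_right[of x "0::'a" 0] by simp

lemma cinner_minus_left: "cinner (-x) (y::'a::chilbert_space) = - cinner x y"
  using cinner_add_left[of x "-x" y] by (simp add: eq_neg_iff_add_eq_0 add.commute)

lemma cinner_minus_right: "cinner (x::'a::chilbert_space) (-y) = - cinner x y"
  using cinner_add_right[of x y "-y"] by (simp add: eq_neg_iff_add_eq_0 add.commute)

lemma cinner_diff_left: "cinner (x - y) (z::'a::chilbert_space) = cinner x z - cinner y z"
  using cinner_add_left[of x "-y" z] cinner_minus_left[of y z] by simp

lemma cinner_diff_right: "cinner (x::'a::chilbert_space) (y - z) = cinner x y - cinner x z"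
  using cinner_add_right[of x y "-z"] cinner_minus_right[of x z] by simp

lemma cinner_scaleR_left: "cinner (t *\<^sub>R x) (y::'a::chilbert_space) = complex_of_real t * cinner x y"
  using cinner_scaleC_left[of "complex_of_real t" x y] by (simp add: scaleC_scaleR)

lemma cinner_scaleR_right: "cinner (x::'a::chilbert_space) (t *\<^sub>R y) = complex_of_real t * cinner x y"
  using cinner_scaleC_right[of x "complex_of_real t" y] by (simp add: scaleC_scaleR)

lemma cinner_self_Re: "Re (cinner x (x::'a::chilbert_space)) = (norm x)\<^sup>2"
  by (simp add: cinner_self_norm)

lemma cinner_self_eq_zero: "cinner x (x::'a::chilbert_space) = 0 \<longleftrightarrow> x = 0"
  by (simp add: cinner_self_norm)

lemma cinner_ext:
  fixes y z :: "'a::chilbert_space"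
  assumes "\<And>x. cinner x y = cinner x z" shows "y = z"
proof -
  have "cinner (y - z) (y - z) = 0"
    using assms[of "y - z"] by (simp add: cinner_diff_right)
  thus ?thesis by (simp add: cinner_self_eq_zero)
qed

lemma norm_scaleC: "norm (scaleC c (x::'a::chilbert_space)) = cmod c * norm x"
proof -
  have "cinner (scaleC c x) (scaleC c x) = cnj c * c * cinner x x"
    by (simp add: cinner_scaleC_left cinner_scaleC_right)
  also have "cnj c * c = complex_of_real ((cmod c)\<^sup>2)"
    by (metis complex_norm_square mult.commute of_real_power)
  finally have "(norm (scaleC c x))\<^sup>2 = ((cmod c) * norm x)\<^sup>2"
    by (metis cinner_self_norm of_real_eq_iff of_real_mult power_mult_distrib)
  thus ?thesis by (simp add: power2_eq_imp_eq)
qed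

lemma norm_plus_sq: "(norm (x + y::'a::chilbert_space))\<^sup>2 = (norm x)\<^sup>2 + (norm y)\<^sup>2 + 2 * Re (cinner x y)"
proof -
  have "cinner (x+y) (x+y) = cinner x x + cinner y y + (cinner x y + cnj (cinner x y))"
    by (simp add: cinner_add_left cinner_add_right cinner_commute[of y x])
  hence "Re (cinner (x+y) (x+y)) = Re (cinner x x) + Re (cinner y y) + 2 * Re (cinner x y)"
    by simp
  thus ?thesis by (simp add: cinner_self_Re)
qed

lemma norm_minus_sq: "(norm (x - y::'a::chilbert_space))\<^sup>2 = (norm x)\<^sup>2 + (norm y)\<^sup>2 - 2 * Re (cinner x y)"
  using norm_plus_sq[of x "-y"] by (simp add: cinner_minus_right)

lemma real_quad_lemma:
  fixes a b k :: real
  assumes "\<And>t. 0 \<le> a - 2*t*k + t^2*k*b" "0 \<le> k" "0 \<le> b"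
  shows "k \<le> a * b"
proof (cases "b > 0")
  case True
  have "0 \<le> a - 2*(1/b)*k + (1/b)^2*k*b" by (rule assms(1))
  also have "\<dots> = a - k / b" using True by (simp add: field_simps power2_eq_square)
  finally show ?thesis using True by (simp add: field_simps)
next
  case False
  hence b: "b = 0" using assms by simp
  show ?thesis
  proof (rule ccontr)
    assume "\<not> ?thesis"
    hence "k > 0" using b by simp
    have "0 \<le> a - 2*((a+1)/(2*k))*k + ((a+1)/(2*k))^2*k*b" by (rule assms(1))
    also have "\<dots> = -1" using \<open>k > 0\<close> b by (simp add: field_simps)
    finally show False by simp
  qed
qed


lemma form_CS:
  fixes q :: "'a::chilbert_space \<Rightarrow> 'a \<Rightarrow> complex"
  assumes herm: "\<And>x y. q x y = cnj (q y x)"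
    and addl: "\<And>x y z. q (x+y) z = q x z + q y z"
    and scl: "\<And>a x y. q (scaleC a x) y = cnj a * q x y"
    and pos: "\<And>x. 0 \<le> Re (q x x)"
  shows "(cmod (q x y))\<^sup>2 \<le> Re (q x x) * Re (q y y)"
proof -
  have addr: "\<And>x y z. q x (y+z) = q x y + q x z"
    by (metis herm addl complex_cnj_add)
  have sclr: "\<And>a x y. q x (scaleC a y) = a * q x y"
    by (metis herm scl complex_cnj_cnj complex_cnj_mult)
  define c where "c = q x y"
  define k where "k = (cmod c)\<^sup>2"
  have qyx: "q y x = cnj c" unfolding c_def by (rule herm)
  have real: "q z z = complex_of_real (Re (q z z))" for z
  proof -
    have "Im (q z z) = Im (cnj (q z z))" using herm[of z z] by (rule arg_cong)
    hence "Im (q z z) = 0" by simp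
    thus ?thesis by (simp add: complex_eq_iff)
  qed
  have ck: "c * cnj c = complex_of_real k" unfolding k_def by (rule complex_norm_square[symmetric])
  have "0 \<le> Re (q x x) - 2*t*k + t^2*k*Re (q y y)" for t
  proof -
    define l where "l = - complex_of_real t * cnj c"
    have "q (x + scaleC l y) (x + scaleC l y) = q x x + l * q x y + cnj l * q y x + cnj l * (l * q y y)"
      unfolding addl addr scl sclr by (simp add: algebra_simps)
    also have "\<dots> = q x x - complex_of_real (t * k) - complex_of_real (t * k) + complex_of_real (t^2 * k) * q y y"
    proof -
      have "l * q x y = - complex_of_real t * (c * cnj c)" by (simp add: l_def c_def)
      moreover have "cnj l * q y x = - complex_of_real t * (c * cnj c)" by (simp add: l_def qyx)
      moreover have "cnj l * l = complex_of_real (t^2) * (c * cnj c)" by (simp add: l_def power2_eq_square)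
      ultimately show ?thesis unfolding ck by (simp add: mult.assoc[symmetric])
    qed
    finally have "Re (q (x + scaleC l y) (x + scaleC l y)) = Re (q x x) - 2*t*k + t^2*k*Re (q y y)"
      by (subst (asm) real[of y]) simp
    thus ?thesis using pos by metis
  qed
  from real_quad_lemma[OF this] pos[of y] show ?thesis by (simp add: k_def c_def)
qed
lemma cinner_CS: "cmod (cinner x (y::'a::chilbert_space)) \<le> norm x * norm y"
proof -
  have "(cmod (cinner x y))\<^sup>2 \<le> Re (cinner x x) * Re (cinner y y)"
    by (rule form_CS[where q=cinner], rule cinner_commute, rule cinner_add_left,
        rule cinner_scaleC_left, simp add: cinner_self_Re)
  also have "\<dots> = (norm x * norm y)\<^sup>2" by (simp add: cinner_self_Re power_mult_distrib)
  finally show ?thesis by (rule power2_le_imp_le) simp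
qed



section \<open>Riesz representation\<close>

lemma riesz:
  fixes f :: "'a::chilbert_space \<Rightarrow> complex"
  assumes add: "\<And>x y. f (x+y) = f x + f y"
    and hom: "\<And>c x. f (scaleC c x) = c * f x"
    and bnd: "\<And>x. cmod (f x) \<le> C * norm x"
  shows "\<exists>z. \<forall>x. f x = cinner z x"
proof (cases "\<forall>x. f x = 0")
  case True then show ?thesis by (intro exI[of _ 0]) simp
next
  case False
  then obtain u where fu: "f u \<noteq> 0" by auto
  have homR: "f (t *\<^sub>R x) = complex_of_real t * f x" for t x
    using hom[of "complex_of_real t" x] by (simp add: scaleC_scaleR)
  have f0: "f 0 = 0" using add[of 0 0] by simp
  have fminus: "f (x - y) = f x - f y" for x y
    using add[of "x - y" y] by simp
  have bl: "bounded_linear f"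
  proof (rule bounded_linear_intro[where K=C])
    show "f (x + y) = f x + f y" for x y by (rule add)
    show "f (r *\<^sub>R x) = r *\<^sub>R f x" for r x by (simp add: homR scaleR_conv_of_real)
    show "norm (f x) \<le> norm x * C" for x using bnd[of x] by (simp add: mult.commute)
  qed
  define H where "H = {x. f x = 1}"
  have u1: "scaleC (1 / f u) u \<in> H" using fu by (simp add: H_def hom)
  define nH where "nH = (\<lambda>x. (norm x)\<^sup>2) ` H"
  define \<delta> where "\<delta> = Inf nH"
  have neH: "nH \<noteq> {}" using u1 by (auto simp: nH_def)
  have bdd: "bdd_below nH" unfolding nH_def by (rule bdd_belowI[of _ 0]) auto
  have lb: "\<delta> \<le> (norm x)\<^sup>2" if "x \<in> H" for x
    unfolding \<delta>_def by (rule cInf_lower) (use that bdd in \<open>auto simp: nH_def\<close>)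
  have "\<exists>x\<in>H. (norm x)\<^sup>2 < \<delta> + 1 / Suc n" for n
  proof -
    have "Inf nH < \<delta> + 1 / Suc n" by (simp add: \<delta>_def)
    from cInf_lessD[OF neH this] show ?thesis by (auto simp: nH_def)
  qed
  then obtain xs where xsH: "\<And>n. xs n \<in> H" and xsn: "\<And>n. (norm (xs n))\<^sup>2 < \<delta> + 1 / Suc n"
    by metis
  have par: "(norm (a - b))\<^sup>2 \<le> 2 * (norm a)\<^sup>2 + 2 * (norm b)\<^sup>2 - 4 * \<delta>" if "a \<in> H" "b \<in> H" for a b
  proof -
    have "(1/2) *\<^sub>R (a + b) \<in> H" using that by (simp add: H_def homR add)
    hence "\<delta> \<le> (norm ((1/2) *\<^sub>R (a + b)))\<^sup>2" by (rule lb)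
    also have "\<dots> = (norm (a + b))\<^sup>2 / 4" by (simp add: power2_eq_square)
    finally have "4 * \<delta> \<le> (norm (a + b))\<^sup>2" by simp
    moreover have "(norm (a + b))\<^sup>2 + (norm (a - b))\<^sup>2 = 2 * (norm a)\<^sup>2 + 2 * (norm b)\<^sup>2"
      by (simp add: norm_plus_sq norm_minus_sq)
    ultimately show ?thesis by linarith
  qed
  have "Cauchy xs"
  proof (rule metric_CauchyI)
    fix e :: real assume e: "e > 0"
    obtain N :: nat where N: "4 / e\<^sup>2 < real N" using reals_Archimedean2 by blast
    have "dist (xs m) (xs n) < e" if "m \<ge> N" "n \<ge> N" for m n
    proof -
      have "(norm (xs m - xs n))\<^sup>2 \<le> 2 * (norm (xs m))\<^sup>2 + 2 * (norm (xs n))\<^sup>2 - 4 * \<delta>"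
        using par xsH by blast
      also have "\<dots> \<le> 2 / Suc m + 2 / Suc n" using xsn[of m] xsn[of n] by simp
      also have "\<dots> \<le> 2 / Suc N + 2 / Suc N"
        using that by (intro add_mono divide_left_mono) auto
      also have "\<dots> < e\<^sup>2"
      proof -
        have "4 / e\<^sup>2 < real (Suc N)" using N by simp
        hence "4 < e\<^sup>2 * Suc N" using e by (simp add: field_simps)
        have p: "real (Suc N) > 0" by simp
        have "2 / real (Suc N) + 2 / real (Suc N) = 4 / real (Suc N)" by (metis add_divide_distrib numeral_Bit0)
        also have "\<dots> < e\<^sup>2" using \<open>4 < e\<^sup>2 * Suc N\<close> p by (simp only: pos_divide_less_eq)
        finally show ?thesis .
      qed
      finally have "(norm (xs m - xs n))\<^sup>2 < e\<^sup>2" .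
      hence "norm (xs m - xs n) < e" using e by (simp add: power_less_imp_less_base)
      thus ?thesis by (simp add: dist_norm)
    qed
    thus "\<exists>M. \<forall>m\<ge>M. \<forall>n\<ge>M. dist (xs m) (xs n) < e" by blast
  qed
  then obtain z0 where lim: "xs \<longlonglongrightarrow> z0" using Cauchy_convergent_iff convergent_def by blast
  have "(\<lambda>n. f (xs n)) \<longlonglongrightarrow> f z0" by (rule bounded_linear.tendsto[OF bl lim])
  moreover have "(\<lambda>n. f (xs n)) = (\<lambda>n. 1)" using xsH by (auto simp: H_def)
  ultimately have "(\<lambda>n. 1) \<longlonglongrightarrow> f z0" by simp
  hence fz0: "f z0 = 1" using LIMSEQ_unique[OF tendsto_const] by metis
  have "(norm z0)\<^sup>2 \<le> \<delta>"
  proof (rule LIMSEQ_le)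
    show "(\<lambda>n. (norm (xs n))\<^sup>2) \<longlonglongrightarrow> (norm z0)\<^sup>2" by (intro tendsto_intros lim)
    show "(\<lambda>n. \<delta> + 1 / Suc n) \<longlonglongrightarrow> \<delta>"
      using tendsto_add[OF tendsto_const LIMSEQ_Suc[OF lim_inverse_n']] by (simp add: divide_inverse)
    show "\<exists>N. \<forall>n\<ge>N. (norm (xs n))\<^sup>2 \<le> \<delta> + 1 / Suc n" using xsn less_imp_le by blast
  qed
  hence minz: "(norm z0)\<^sup>2 \<le> (norm w)\<^sup>2" if "w \<in> H" for w using lb[OF that] by linarith
  have orth: "cinner z0 v = 0" if fv: "f v = 0" for v
  proof -
    define c where "c = cinner z0 v"
    define k where "k = (cmod c)\<^sup>2"
    define N where "N = (norm v)\<^sup>2"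
    define t where "t = 1 / (N + 1)"
    have Nn: "N \<ge> 0" by (simp add: N_def)
    have tpos: "t > 0" using Nn by (simp add: t_def)
    define l where "l = - complex_of_real t * cnj c"
    have "z0 + scaleC l v \<in> H" using fz0 fv by (simp add: H_def add hom)
    hence "(norm z0)\<^sup>2 \<le> (norm (z0 + scaleC l v))\<^sup>2" by (rule minz)
    also have "\<dots> = (norm z0)\<^sup>2 + (cmod l)\<^sup>2 * N + 2 * Re (l * c)"
      by (simp add: norm_plus_sq norm_scaleC cinner_scaleC_right c_def N_def power_mult_distrib)
    also have "(cmod l)\<^sup>2 = t\<^sup>2 * k" using tpos by (simp add: l_def k_def norm_mult power_mult_distrib)
    also have "l * c = - complex_of_real (t * k)"
    proof -
      have ck: "cnj c * c = complex_of_real k" unfolding k_def by (metis complex_norm_square mult.commute)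
      have "l * c = - complex_of_real t * (cnj c * c)" by (simp add: l_def)
      thus ?thesis unfolding ck by simp
    qed
    finally have "0 \<le> t\<^sup>2 * k * N - 2 * t * k" by simp
    hence "0 \<le> t * k * (t * N - 2)" by (simp add: algebra_simps power2_eq_square)
    moreover have "t * N < 1" using Nn by (simp add: t_def field_simps)
    ultimately have "k \<le> 0" using tpos
      by (metis diff_less_0_iff_less less_trans mult_less_0_iff not_le one_less_numeral_iff semiring_norm(76) zero_less_mult_iff)
    hence "k = 0" by (simp add: k_def)
    thus ?thesis by (simp add: k_def c_def)
  qed
  have z0ne: "z0 \<noteq> 0" using fz0 f0 by auto
  define n0 where "n0 = (norm z0)\<^sup>2"
  have n0pos: "n0 > 0" using z0ne by (simp add: n0_def)
  show ?thesis
  proof (intro exI allI)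
    fix x
    have "f (x - scaleC (f x) z0) = 0" by (simp add: fminus hom fz0)
    hence "cinner z0 (x - scaleC (f x) z0) = 0" by (rule orth)
    hence "cinner z0 x = f x * complex_of_real n0"
      by (simp add: cinner_diff_right cinner_scaleC_right cinner_self_norm n0_def)
    hence "cinner (scaleC (complex_of_real (1 / n0)) z0) x = f x"
      using n0pos by (simp add: cinner_scaleC_left)
    thus "f x = cinner (scaleC (complex_of_real (1 / n0)) z0) x" by simp
  qed
qed



section \<open>Bounded operators\<close>

lemma clinear_add: "clinear_op T \<Longrightarrow> T (x + y) = T x + T y"
  by (simp add: clinear_op_def)
lemma clinear_scaleC: "clinear_op T \<Longrightarrow> T (scaleC c x) = scaleC c (T x)"
  by (simp add: clinear_op_def)
lemma clinear_zero: "clinear_op T \<Longrightarrow> T 0 = 0"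
  using clinear_add[of T 0 0] by simp
lemma clinear_minus: "clinear_op T \<Longrightarrow> T (- x) = - T x"
  using clinear_add[of T x "-x"] clinear_zero[of T] by (simp add: eq_neg_iff_add_eq_0 add.commute)
lemma clinear_diff: "clinear_op T \<Longrightarrow> T (x - y) = T x - T y"
  using clinear_add[of T x "-y"] clinear_minus[of T y] by simp
lemma clinear_scaleR: "clinear_op T \<Longrightarrow> T (t *\<^sub>R x) = t *\<^sub>R T x"
  using clinear_scaleC[of T "complex_of_real t" x] by (simp add: scaleC_scaleR)

lemma bounded_op_clinear: "bounded_op T \<Longrightarrow> clinear_op T"
  by (simp add: bounded_op_def)

lemma bounded_op_bound: "bounded_op T \<Longrightarrow> \<exists>K\<ge>0. \<forall>x. norm (T x) \<le> K * norm x"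
proof -
  assume "bounded_op T"
  then obtain K where K: "\<And>x. norm (T x) \<le> norm x * K" by (auto simp: bounded_op_def)
  have "norm (T x) \<le> max K 0 * norm x" for x
    using K[of x] by (smt (verit) mult.commute mult_right_mono norm_ge_zero)
  thus ?thesis by (intro exI[of _ "max K 0"]) auto
qed

lemma bounded_op_intro:
  assumes "\<And>x y. T (x + y) = T x + T y" "\<And>c x. T (scaleC c x) = scaleC c (T x)"
    "\<And>x. norm (T x) \<le> K * norm x"
  shows "bounded_op T"
  unfolding bounded_op_def clinear_op_def using assms by (metis mult.commute)

lemma bounded_op_bounded_linear: "bounded_op T \<Longrightarrow> bounded_linear T"
proof -
  assume b: "bounded_op T"
  then obtain K where K: "\<And>x. norm (T x) \<le> K * norm x" using bounded_op_bound by blast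
  have c: "clinear_op T" using b by (rule bounded_op_clinear)
  show ?thesis
    by (rule bounded_linear_intro[where K=K]) (use c K in \<open>auto simp: clinear_add clinear_scaleR mult.commute\<close>)
qed

lemma bounded_op_id: "bounded_op id"
  by (rule bounded_op_intro[where K=1]) auto

lemma bounded_op_id': "bounded_op (\<lambda>x. x)"
  by (rule bounded_op_intro[where K=1]) auto

lemma bounded_op_comp: "bounded_op S \<Longrightarrow> bounded_op T \<Longrightarrow> bounded_op (S \<circ> T)"
proof -
  assume S: "bounded_op S" and T: "bounded_op T"
  obtain K where K: "K \<ge> 0" "\<And>x. norm (S x) \<le> K * norm x" using bounded_op_bound[OF S] by blast
  obtain L where L: "\<And>x. norm (T x) \<le> L * norm x" using bounded_op_bound[OF T] by blast
  have cS: "clinear_op S" "clinear_op T" using S T bounded_op_clinear by auto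
  show ?thesis
  proof (rule bounded_op_intro[where K="K*L"])
    show "(S \<circ> T) (x + y) = (S \<circ> T) x + (S \<circ> T) y" for x y using cS by (simp add: clinear_add)
    show "(S \<circ> T) (scaleC c x) = scaleC c ((S \<circ> T) x)" for c x using cS by (simp add: clinear_scaleC)
    show "norm ((S \<circ> T) x) \<le> K * L * norm x" for x
      using K(2)[of "T x"] mult_left_mono[OF L[of x] K(1)] by (simp add: mult.assoc)
  qed
qed

lemma bounded_op_add: "bounded_op S \<Longrightarrow> bounded_op T \<Longrightarrow> bounded_op (\<lambda>x. S x + T x)"
proof -
  assume S: "bounded_op S" and T: "bounded_op T"
  obtain K where K: "\<And>x. norm (S x) \<le> K * norm x" using bounded_op_bound[OF S] by blast
  obtain L where L: "\<And>x. norm (T x) \<le> L * norm x" using bounded_op_bound[OF T] by blast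
  have cS: "clinear_op S" "clinear_op T" using S T bounded_op_clinear by auto
  show ?thesis
  proof (rule bounded_op_intro[where K="K+L"])
    show "S (x + y) + T (x + y) = (S x + T x) + (S y + T y)" for x y using cS by (simp add: clinear_add)
    show "S (scaleC c x) + T (scaleC c x) = scaleC c (S x + T x)" for c x
      using cS by (simp add: clinear_scaleC scaleC_add_right)
    show "norm (S x + T x) \<le> (K + L) * norm x" for x
      using norm_triangle_ineq[of "S x" "T x"] K[of x] L[of x] by (simp add: algebra_simps)
  qed
qed

lemma bounded_op_scaleC: "bounded_op T \<Longrightarrow> bounded_op (\<lambda>x. scaleC c (T x))"
proof -
  assume T: "bounded_op T"
  obtain L where L: "L \<ge> 0" "\<And>x. norm (T x) \<le> L * norm x" using bounded_op_bound[OF T] by blast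
  have cS: "clinear_op T" using T bounded_op_clinear by auto
  show ?thesis
  proof (rule bounded_op_intro[where K="cmod c * L"])
    show "scaleC c (T (x + y)) = scaleC c (T x) + scaleC c (T y)" for x y using cS by (simp add: clinear_add scaleC_add_right)
    show "scaleC c (T (scaleC a x)) = scaleC a (scaleC c (T x))" for a x
      using cS by (simp add: clinear_scaleC scaleC_scaleC mult.commute)
    show "norm (scaleC c (T x)) \<le> cmod c * L * norm x" for x
      using mult_left_mono[OF L(2)[of x], of "cmod c"] by (simp add: norm_scaleC mult.assoc)
  qed
qed

lemma bounded_op_scaleR: "bounded_op T \<Longrightarrow> bounded_op (\<lambda>x. t *\<^sub>R T x)"
  using bounded_op_scaleC[of T "complex_of_real t"] by (simp add: scaleC_scaleR)

lemma bounded_op_minus: "bounded_op T \<Longrightarrow> bounded_op (\<lambda>x. - T x)"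
  using bounded_op_scaleR[of T "-1"] by simp

lemma bounded_op_diff: "bounded_op S \<Longrightarrow> bounded_op T \<Longrightarrow> bounded_op (\<lambda>x. S x - T x)"
  using bounded_op_add[of S "\<lambda>x. - T x"] bounded_op_minus[of T] by simp

section \<open>Adjoints\<close>

lemma adj_exists:
  assumes T: "bounded_op T"
  shows "\<exists>S. bounded_op S \<and> (\<forall>x y. cinner (T x) y = cinner x (S y))"
proof -
  obtain K where K: "K \<ge> 0" "\<And>x. norm (T x) \<le> K * norm x" using bounded_op_bound[OF T] by blast
  have cT: "clinear_op T" using T bounded_op_clinear by auto
  have ex: "\<exists>z. \<forall>x. cinner (T x) y = cinner x z" for y
  proof -
    have "\<exists>z. \<forall>x. cinner y (T x) = cinner z x"
    proof (rule riesz[where C="norm y * K"])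
      show "cinner y (T (x + x')) = cinner y (T x) + cinner y (T x')" for x x'
        using cT by (simp add: clinear_add cinner_add_right)
      show "cinner y (T (scaleC c x)) = c * cinner y (T x)" for c x
        using cT by (simp add: clinear_scaleC cinner_scaleC_right)
      show "cmod (cinner y (T x)) \<le> norm y * K * norm x" for x
        using cinner_CS[of y "T x"] mult_left_mono[OF K(2)[of x], of "norm y"] by (simp add: mult.assoc)
    qed
    then obtain z where "\<And>x. cinner y (T x) = cinner z x" by blast
    hence "cinner (T x) y = cinner x z" for x
      using cinner_commute[of "T x" y] cinner_commute[of x z] by simp
    thus ?thesis by blast
  qed
  define S where "S y = (SOME z. \<forall>x. cinner (T x) y = cinner x z)" for y
  have Sp: "cinner (T x) y = cinner x (S y)" for x y
    using someI_ex[OF ex[of y]] unfolding S_def by blast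
  have bS: "bounded_op S"
  proof (rule bounded_op_intro[where K=K])
    show "S (x + y) = S x + S y" for x y
      by (rule cinner_ext) (simp add: Sp[symmetric] cinner_add_right)
    show "S (scaleC c x) = scaleC c (S x)" for c x
      by (rule cinner_ext) (simp add: Sp[symmetric] cinner_scaleC_right)
    show "norm (S y) \<le> K * norm y" for y
    proof -
      have "(norm (S y))\<^sup>2 = Re (cinner (S y) (S y))" by (simp add: cinner_self_Re)
      also have "\<dots> = Re (cinner (T (S y)) y)" by (simp add: Sp)
      also have "\<dots> \<le> cmod (cinner (T (S y)) y)" by (rule complex_Re_le_cmod)
      also have "\<dots> \<le> norm (T (S y)) * norm y" by (rule cinner_CS)
      also have "\<dots> \<le> K * norm (S y) * norm y" by (rule mult_right_mono[OF K(2)]) simp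
      finally have h: "norm (S y) * norm (S y) \<le> (K * norm y) * norm (S y)"
        by (simp add: power2_eq_square algebra_simps)
      show ?thesis
      proof (cases "norm (S y) = 0")
        case True thus ?thesis using K by simp
      next
        case False thus ?thesis using h by (simp add: mult_le_cancel_right)
      qed
    qed
  qed
  show ?thesis using bS Sp by blast
qed

lemma adj_prop:
  assumes "bounded_op T"
  shows "bounded_op (adj T) \<and> (\<forall>x y. cinner (T x) y = cinner x (adj T y))"
  unfolding adj_def by (rule someI_ex[OF adj_exists[OF assms]])

lemma adj_bounded: "bounded_op T \<Longrightarrow> bounded_op (adj T)"
  using adj_prop by blast

lemma adj_cinner: "bounded_op T \<Longrightarrow> cinner (T x) y = cinner x (adj T y)"
  using adj_prop by blast

lemma adj_cinner': "bounded_op T \<Longrightarrow> cinner (adj T x) y = cinner x (T y)"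
  by (metis adj_cinner cinner_commute)

lemma adj_unique:
  assumes "bounded_op T" "\<And>x y. cinner (T x) y = cinner x (S y)"
  shows "adj T = S"
proof
  fix y show "adj T y = S y"
    by (rule cinner_ext) (simp add: assms(2) adj_cinner[OF assms(1), symmetric])
qed

lemma adj_adj: "bounded_op T \<Longrightarrow> adj (adj T) = T"
  by (rule adj_unique) (auto simp: adj_bounded adj_cinner')

lemma adj_comp:
  assumes "bounded_op S" "bounded_op T"
  shows "adj (S \<circ> T) = adj T \<circ> adj S"
  by (rule adj_unique) (auto simp: assms bounded_op_comp adj_cinner)

lemma adj_id: "adj id = (id :: 'a::chilbert_space \<Rightarrow> 'a)"
  by (rule adj_unique) (auto simp: bounded_op_id)

lemma adj_add:
  assumes "bounded_op S" "bounded_op T"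
  shows "adj (\<lambda>x. S x + T x) = (\<lambda>x. adj S x + adj T x)"
  by (rule adj_unique) (auto simp: assms bounded_op_add adj_cinner cinner_add_left cinner_add_right)

lemma adj_scaleR:
  assumes "bounded_op T"
  shows "adj (\<lambda>x. t *\<^sub>R T x) = (\<lambda>x. t *\<^sub>R adj T x)"
  by (rule adj_unique) (auto simp: assms bounded_op_scaleR adj_cinner cinner_scaleR_left cinner_scaleR_right)

lemma adj_diff:
  assumes "bounded_op S" "bounded_op T"
  shows "adj (\<lambda>x. S x - T x) = (\<lambda>x. adj S x - adj T x)"
  by (rule adj_unique) (auto simp: assms bounded_op_diff adj_cinner cinner_diff_left cinner_diff_right)

lemma adj_id': "adj (\<lambda>x. x) = (\<lambda>x::'a::chilbert_space. x)"
  using adj_id by (simp add: id_def)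

lemma norm_adj_le:
  assumes T: "bounded_op T" and K: "\<And>x. norm (T x) \<le> K * norm x" and K0: "K \<ge> 0"
  shows "norm (adj T y) \<le> K * norm y"
proof -
  have "(norm (adj T y))\<^sup>2 = Re (cinner (adj T y) (adj T y))" by (simp add: cinner_self_Re)
  also have "\<dots> = Re (cinner (T (adj T y)) y)" by (simp add: adj_cinner[OF T])
  also have "\<dots> \<le> cmod (cinner (T (adj T y)) y)" by (rule complex_Re_le_cmod)
  also have "\<dots> \<le> norm (T (adj T y)) * norm y" by (rule cinner_CS)
  also have "\<dots> \<le> K * norm (adj T y) * norm y" by (rule mult_right_mono[OF K]) simp
  finally have h: "norm (adj T y) * norm (adj T y) \<le> (K * norm y) * norm (adj T y)"
    by (simp add: power2_eq_square algebra_simps)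
  show ?thesis
  proof (cases "norm (adj T y) = 0")
    case True thus ?thesis using K0 by simp
  next
    case False thus ?thesis using h by (simp add: mult_le_cancel_right)
  qed
qed



section \<open>Invertibility\<close>

lemma op_invertible_bounded: "op_invertible T \<Longrightarrow> bounded_op T"
  by (simp add: op_invertible_def)

lemma op_invertible_intro:
  "bounded_op T \<Longrightarrow> bounded_op S \<Longrightarrow> S \<circ> T = id \<Longrightarrow> T \<circ> S = id \<Longrightarrow> op_invertible T"
  unfolding op_invertible_def by blast

lemma op_invertible_comp:
  assumes "op_invertible P" "op_invertible Q"
  shows "op_invertible (P \<circ> Q)"
proof -
  obtain S where S: "bounded_op S" "S \<circ> P = id" "P \<circ> S = id" using assms(1) op_invertible_def by blast
  obtain R where R: "bounded_op R" "R \<circ> Q = id" "Q \<circ> R = id" using assms(2) op_invertible_def by blast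
  show ?thesis
  proof (rule op_invertible_intro[where S="R \<circ> S"])
    show "bounded_op (P \<circ> Q)" using assms by (simp add: bounded_op_comp op_invertible_bounded)
    show "bounded_op (R \<circ> S)" using S R by (simp add: bounded_op_comp)
    show "(R \<circ> S) \<circ> (P \<circ> Q) = id" using S R by (simp add: comp_assoc) (metis comp_assoc id_comp)
    show "(P \<circ> Q) \<circ> (R \<circ> S) = id" using S R by (simp add: comp_assoc) (metis comp_assoc id_comp)
  qed
qed

lemma op_invertible_scaleC:
  assumes "op_invertible P" "c \<noteq> 0"
  shows "op_invertible (\<lambda>x. scaleC c (P x))"
proof -
  obtain S where S: "bounded_op S" "S \<circ> P = id" "P \<circ> S = id" using assms(1) op_invertible_def by blast
  have cS: "clinear_op S" "clinear_op P" using S assms bounded_op_clinear op_invertible_bounded by auto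
  show ?thesis
  proof (rule op_invertible_intro[where S="\<lambda>x. S (scaleC (1/c) x)"])
    show "bounded_op (\<lambda>x. scaleC c (P x))" using assms by (simp add: bounded_op_scaleC op_invertible_bounded)
    show "bounded_op (\<lambda>x. S (scaleC (1/c) x))"
      using bounded_op_scaleC[OF S(1), of "1/c"] cS by (simp add: clinear_scaleC)
    show "(\<lambda>x. S (scaleC (1/c) x)) \<circ> (\<lambda>x. scaleC c (P x)) = id"
      using S(2) assms(2) cS by (auto simp: fun_eq_iff scaleC_scaleC clinear_scaleC scaleC_one)
    show "(\<lambda>x. scaleC c (P x)) \<circ> (\<lambda>x. S (scaleC (1/c) x)) = id"
      using S(3) assms(2) cS by (auto simp: fun_eq_iff scaleC_scaleC clinear_scaleC scaleC_one)
  qed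
qed

lemma op_invertible_bounded_below:
  assumes "op_invertible P"
  shows "\<exists>C>0. \<forall>x. norm x \<le> C * norm (P x)"
proof -
  obtain S where S: "bounded_op S" "S \<circ> P = id" using assms(1) op_invertible_def by blast
  obtain K where K: "K \<ge> 0" "\<And>x. norm (S x) \<le> K * norm x" using bounded_op_bound[OF S(1)] by blast
  have "norm x \<le> (K + 1) * norm (P x)" for x
  proof -
    have "x = S (P x)" using S(2) by (metis comp_apply id_apply)
    hence "norm x \<le> K * norm (P x)" using K(2) by metis
    also have "\<dots> \<le> (K + 1) * norm (P x)" by (simp add: mult_right_mono)
    finally show ?thesis .
  qed
  thus ?thesis using K(1) by (intro exI[of _ "K+1"]) auto
qed

lemma op_invertible_inv:
  assumes "S \<circ> T = id" "T \<circ> S = id"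
  shows "inv T = S"
  by (rule inv_unique_comp[OF assms(2) assms(1)])

lemma neumann:
  fixes K :: "'a::chilbert_space \<Rightarrow> 'a"
  assumes bK: "bounded_op K" and Kb: "\<And>x. norm (K x) \<le> k * norm x" and k: "0 \<le> k" "k < 1"
  shows "op_invertible (\<lambda>x. x - K x)"
proof -
  have cK: "clinear_op K" using bK bounded_op_clinear by auto
  have ex: "\<exists>!x. y + K x = x" for y
  proof (rule banach_fix_type[OF k])
    show "\<forall>a b. dist (y + K a) (y + K b) \<le> k * dist a b"
      using Kb cK by (simp add: dist_norm clinear_diff[symmetric])
  qed
  define S where "S y = (THE x. y + K x = x)" for y
  have Sp: "y + K (S y) = S y" for y unfolding S_def by (rule theI'[OF ex])
  have Su: "y + K x = x \<Longrightarrow> S y = x" for x y using ex Sp by metis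
  show ?thesis
  proof (rule op_invertible_intro[where S=S])
    show "bounded_op (\<lambda>x. x - K x)" using bK by (simp add: bounded_op_diff bounded_op_id')
    show "bounded_op S"
    proof (rule bounded_op_intro[where K="1/(1-k)"])
      show "S (x + y) = S x + S y" for x y
        by (rule Su) (metis (no_types, lifting) Sp add.assoc add.left_commute cK clinear_add)
      show "S (scaleC c x) = scaleC c (S x)" for c x
        by (rule Su) (metis Sp cK clinear_scaleC scaleC_add_right)
      show "norm (S y) \<le> 1 / (1 - k) * norm y" for y
      proof -
        have "norm (S y) \<le> norm y + k * norm (S y)"
          by (metis Sp Kb norm_triangle_ineq add_left_mono order_trans)
        hence "(1 - k) * norm (S y) \<le> norm y" by (simp add: algebra_simps)
        thus ?thesis using k by (simp add: field_simps)
      qed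
    qed
    show "S \<circ> (\<lambda>x. x - K x) = id" by (rule ext) (simp add: Su)
    show "(\<lambda>x. x - K x) \<circ> S = id" by (rule ext) (metis Sp add_diff_cancel_right' comp_apply id_apply)
  qed
qed

lemma onorm_le':
  assumes "\<And>x. norm (f x) \<le> b * norm x" "b \<ge> 0"
  shows "onorm f \<le> b"
  unfolding onorm_def
proof (rule cSUP_least)
  show "UNIV \<noteq> {}" by simp
  fix x
  show "norm (f x) / norm x \<le> b"
  proof (cases "norm x = 0")
    case True thus ?thesis using assms(2) by simp
  next
    case False thus ?thesis using assms(1)[of x] by (simp add: divide_le_eq)
  qed
qed

lemma spec_outside:
  assumes bD: "bounded_op D" and Db: "\<And>x. norm (D x) \<le> R * norm x" and R: "R \<ge> 0" and c: "cmod c > R"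
  shows "op_invertible (\<lambda>x. D x - scaleC c x)"
proof -
  have c0: "c \<noteq> 0" using c R by auto
  define K where "K x = scaleC (1/c) (D x)" for x
  have bK: "bounded_op K" unfolding K_def using bD by (rule bounded_op_scaleC)
  have Kb: "norm (K x) \<le> (R / cmod c) * norm x" for x
    using Db[of x] c0 by (simp add: K_def norm_scaleC norm_divide field_simps)
  have "op_invertible (\<lambda>x. x - K x)"
    by (rule neumann[OF bK Kb]) (use R c in \<open>auto simp: divide_less_eq\<close>)
  hence "op_invertible (\<lambda>x. scaleC (-c) (x - K x))" using c0 by (intro op_invertible_scaleC) auto
  moreover have "(\<lambda>x. scaleC (-c) (x - K x)) = (\<lambda>x. D x - scaleC c x)"
    using c0 by (auto simp: fun_eq_iff K_def scaleC_diff_right scaleC_scaleC scaleC_minus_left scaleC_one)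
  ultimately show ?thesis by simp
qed

lemma spec_inside:
  assumes iD: "op_invertible D" and ED: "E \<circ> D = id" "D \<circ> E = id" and bE: "bounded_op E"
    and Eb: "\<And>x. norm (E x) \<le> R * norm x" and R: "R \<ge> 0" and c: "cmod c * R < 1"
  shows "op_invertible (\<lambda>x. D x - scaleC c x)"
proof -
  define K where "K x = scaleC c (E x)" for x
  have bK: "bounded_op K" unfolding K_def using bE by (rule bounded_op_scaleC)
  have Kb: "norm (K x) \<le> (cmod c * R) * norm x" for x
    using mult_left_mono[OF Eb[of x], of "cmod c"] by (simp add: K_def norm_scaleC mult.assoc)
  have "op_invertible (\<lambda>x. x - K x)"
    by (rule neumann[OF bK Kb]) (use R c in auto)
  hence "op_invertible (D \<circ> (\<lambda>x. x - K x))" using iD by (intro op_invertible_comp)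
  moreover have "D \<circ> (\<lambda>x. x - K x) = (\<lambda>x. D x - scaleC c x)"
  proof -
    have cD: "clinear_op D" using iD op_invertible_bounded bounded_op_clinear by blast
    have "D (E x) = x" for x using ED(2) by (metis comp_apply id_apply)
    thus ?thesis using cD by (auto simp: fun_eq_iff K_def clinear_diff clinear_scaleC)
  qed
  ultimately show ?thesis by simp
qed



lemma selfadj_cinner: "selfadjoint_op D \<Longrightarrow> cinner (D x) y = cinner x (D y)"
  unfolding selfadjoint_op_def using adj_cinner by metis

lemma selfadj_norm_bound:
  assumes sD: "selfadjoint_op D" and R: "R \<ge> 0"
    and inv: "\<And>c. cmod c > R \<Longrightarrow> op_invertible (\<lambda>x. D x - scaleC c x)"
  shows "norm (D x) \<le> R * norm x"
proof -
  have bD: "bounded_op D" using sD by (simp add: selfadjoint_op_def)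
  have blD: "bounded_linear D" using bD by (rule bounded_op_bounded_linear)
  have cD: "clinear_op D" using bD by (rule bounded_op_clinear)
  define M where "M = onorm D"
  have DM: "norm (D y) \<le> M * norm y" for y unfolding M_def by (rule onorm[OF blD])
  have M0: "M \<ge> 0" unfolding M_def by (rule onorm_pos_le[OF blD])
  show ?thesis
  proof (cases "M \<le> R")
    case True thus ?thesis using DM[of x] by (meson mult_right_mono norm_ge_zero order_trans)
  next
    case False
    hence MR: "M > R" by simp
    hence Mpos: "M > 0" using R by simp
    have i1: "op_invertible (\<lambda>x. D x - M *\<^sub>R x)"
      using inv[of "complex_of_real M"] MR unfolding scaleC_scaleR by simp
    have i2: "op_invertible (\<lambda>x. D x - (-M) *\<^sub>R x)"
      using inv[of "complex_of_real (-M)"] MR unfolding scaleC_scaleR by simp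
    define P where "P = (\<lambda>x. D x - M *\<^sub>R x) \<circ> (\<lambda>x. D x - (-M) *\<^sub>R x)"
    have iP: "op_invertible P" unfolding P_def using i1 i2 by (rule op_invertible_comp)
    have Px: "P y = D (D y) - (M * M) *\<^sub>R y" for y
      using cD by (simp add: P_def clinear_diff clinear_scaleR clinear_add algebra_simps)
    obtain C where C: "C > 0" "\<And>y. norm y \<le> C * norm (P y)" using op_invertible_bounded_below[OF iP] by blast
    have key: "(norm (P y))\<^sup>2 \<le> M\<^sup>2 * (M\<^sup>2 * (norm y)\<^sup>2 - (norm (D y))\<^sup>2)" for y
    proof -
      have "(norm (P y))\<^sup>2 = (norm (D (D y)))\<^sup>2 + (norm ((M * M) *\<^sub>R y))\<^sup>2 - 2 * Re (cinner (D (D y)) ((M * M) *\<^sub>R y))"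
        by (simp add: Px norm_minus_sq)
      also have "cinner (D (D y)) ((M * M) *\<^sub>R y) = complex_of_real (M * M) * cinner (D y) (D y)"
        by (simp add: cinner_scaleR_right selfadj_cinner[OF sD])
      also have "Re (complex_of_real (M * M) * cinner (D y) (D y)) = M\<^sup>2 * (norm (D y))\<^sup>2"
        by (simp add: cinner_self_norm power2_eq_square)
      also have "(norm ((M * M) *\<^sub>R y))\<^sup>2 = M\<^sup>2 * M\<^sup>2 * (norm y)\<^sup>2"
        using M0 by (simp add: power2_eq_square)
      also have "(norm (D (D y)))\<^sup>2 \<le> M\<^sup>2 * (norm (D y))\<^sup>2"
      proof -
        have "norm (D (D y)) \<le> M * norm (D y)" by (rule DM)
        hence "(norm (D (D y)))\<^sup>2 \<le> (M * norm (D y))\<^sup>2" by (simp add: power_mono)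
        thus ?thesis by (simp add: power_mult_distrib)
      qed
      finally show ?thesis by (simp add: algebra_simps)
    qed
    define \<delta> where "\<delta> = 1 / (C\<^sup>2 * M\<^sup>2)"
    have dpos: "\<delta> > 0" using C Mpos by (simp add: \<delta>_def)
    have bnd: "(norm (D y))\<^sup>2 \<le> (M\<^sup>2 - \<delta>) * (norm y)\<^sup>2" for y
    proof -
      have "(norm y)\<^sup>2 \<le> (C * norm (P y))\<^sup>2" using C(2)[of y] by (simp add: power_mono)
      also have "\<dots> = C\<^sup>2 * (norm (P y))\<^sup>2" by (simp add: power_mult_distrib)
      also have "\<dots> \<le> C\<^sup>2 * (M\<^sup>2 * (M\<^sup>2 * (norm y)\<^sup>2 - (norm (D y))\<^sup>2))"
        using key[of y] by (simp add: mult_left_mono)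
      finally have "(norm y)\<^sup>2 \<le> C\<^sup>2 * M\<^sup>2 * (M\<^sup>2 * (norm y)\<^sup>2 - (norm (D y))\<^sup>2)" by (simp add: mult.assoc)
      hence "\<delta> * (norm y)\<^sup>2 \<le> M\<^sup>2 * (norm y)\<^sup>2 - (norm (D y))\<^sup>2"
        using C Mpos by (simp add: \<delta>_def field_simps)
      thus ?thesis by (simp add: algebra_simps)
    qed
    define b where "b = sqrt (max 0 (M\<^sup>2 - \<delta>))"
    have "norm (D y) \<le> b * norm y" for y
    proof -
      have "(norm (D y))\<^sup>2 \<le> (b * norm y)\<^sup>2"
        using bnd[of y] by (simp add: b_def power_mult_distrib) (smt (verit) mult_right_mono zero_le_power2)
      thus ?thesis by (rule power2_le_imp_le) (simp add: b_def)
    qed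
    hence "M \<le> b" unfolding M_def by (rule onorm_le') (simp add: b_def)
    hence "M\<^sup>2 \<le> b\<^sup>2" using M0 by (simp add: power_mono)
    hence "M\<^sup>2 \<le> max 0 (M\<^sup>2 - \<delta>)" by (simp add: b_def)
    thus ?thesis using dpos Mpos by (simp add: max_def split: if_splits)
  qed
qed

lemma adj_inverse:
  assumes "bounded_op S" "bounded_op T" "S \<circ> T = id" "T \<circ> S = id"
  shows "adj S \<circ> adj T = id" "adj T \<circ> adj S = id"
proof -
  have "adj S \<circ> adj T = adj (T \<circ> S)" by (rule adj_comp[OF assms(2,1), symmetric])
  thus "adj S \<circ> adj T = id" using assms(4) adj_id by simp
  have "adj T \<circ> adj S = adj (S \<circ> T)" by (rule adj_comp[OF assms(1,2), symmetric])
  thus "adj T \<circ> adj S = id" using assms(3) adj_id by simp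
qed

lemma selfadj_inverse:
  assumes "selfadjoint_op D" "bounded_op E" "E \<circ> D = id" "D \<circ> E = id"
  shows "selfadjoint_op E"
proof -
  have bD: "bounded_op D" "adj D = D" using assms(1) by (auto simp: selfadjoint_op_def)
  have a: "adj E \<circ> D = id" "D \<circ> adj E = id" using adj_inverse[OF assms(2) bD(1) assms(3,4)] bD(2) by auto
  have "adj E = adj E \<circ> (D \<circ> E)" using assms(4) by simp
  also have "\<dots> = E" using a(1) by (simp add: comp_assoc[symmetric])
  finally show ?thesis using assms(2) by (simp add: selfadjoint_op_def)
qed

lemma closure_annulus_sub: "closure (annulus r) \<subseteq> {z. r \<le> cmod z \<and> cmod z \<le> 1 / r}"
proof (rule closure_minimal)
  show "annulus r \<subseteq> {z. r \<le> cmod z \<and> cmod z \<le> 1 / r}" by (auto simp: annulus_def)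
  have "closed ({z. r \<le> cmod z} \<inter> {z. cmod z \<le> 1 / r})"
    by (intro closed_Int closed_Collect_le continuous_intros)
  thus "closed {z. r \<le> cmod z \<and> cmod z \<le> 1 / r}" by (simp add: Collect_conj_eq)
qed

lemma closed_annulus_sub:
  assumes r: "0 < r" "r < 1"
  shows "{z. r \<le> cmod z \<and> cmod z \<le> 1 / r} \<subseteq> closure (annulus r)"
proof
  fix z assume z: "z \<in> {z. r \<le> cmod z \<and> cmod z \<le> 1 / r}"
  hence zr: "r \<le> cmod z" "cmod z \<le> 1 / r" by auto
  have z0: "z \<noteq> 0" using zr r by auto
  define m where "m = (r + 1 / r) / 2"
  have "r * r < 1 * 1" using r by (intro mult_strict_mono) auto
  hence r1: "r < 1 / r" using r by (simp add: field_simps)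
  have m: "r < m" "m < 1 / r" using r1 by (auto simp: m_def)
  define u where "u = z / complex_of_real (cmod z)"
  have u: "cmod u = 1" using z0 by (simp add: u_def norm_divide)
  have zu: "complex_of_real (cmod z) * u = z" using z0 by (simp add: u_def)
  define t where "t n = inverse (real (Suc (Suc n)))" for n
  have t1: "0 < t n" for n by (auto simp: t_def)
  have t2: "t n < 1" for n unfolding t_def by (subst inverse_less_1_iff) simp
  note t = t1 t2
  define s where "s n = complex_of_real ((1 - t n) * cmod z + t n * m) * u" for n
  have "\<forall>n. s n \<in> annulus r"
  proof
    fix n
    have a: "r < (1 - t n) * cmod z + t n * m"
    proof -
      have "(1 - t n) * r \<le> (1 - t n) * cmod z" using t[of n] zr by (intro mult_left_mono) auto
      moreover have "t n * r < t n * m" using t[of n] m by simp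
      ultimately show ?thesis by (simp add: algebra_simps)
    qed
    have b: "(1 - t n) * cmod z + t n * m < 1 / r"
    proof -
      have "(1 - t n) * cmod z \<le> (1 - t n) * (1 / r)" using t[of n] zr by (intro mult_left_mono) auto
      moreover have "t n * m < t n * (1 / r)" using t[of n] m by (intro mult_strict_left_mono) auto
      ultimately show ?thesis by (simp add: algebra_simps)
    qed
    have "cmod (s n) = (1 - t n) * cmod z + t n * m" using a r u unfolding s_def norm_mult norm_of_real by simp
    thus "s n \<in> annulus r" using a b by (simp add: annulus_def)
  qed
  moreover have "s \<longlonglongrightarrow> z"
  proof -
    have "t \<longlonglongrightarrow> 0" unfolding t_def by (rule LIMSEQ_Suc[OF LIMSEQ_inverse_real_of_nat])
    hence "(\<lambda>n. complex_of_real ((1 - t n) * cmod z + t n * m) * u) \<longlonglongrightarrow> complex_of_real ((1 - 0) * cmod z + 0 * m) * u"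
      by (intro tendsto_intros)
    moreover have "(\<lambda>n. complex_of_real ((1 - t n) * cmod z + t n * m) * u) = s" by (simp add: s_def fun_eq_iff)
    ultimately show ?thesis using zu by simp
  qed
  ultimately show "z \<in> closure (annulus r)" unfolding closure_sequential by blast
qed



lemma blinfun_bounded_op: "clinear_op (blinfun_apply Y) \<Longrightarrow> bounded_op (blinfun_apply Y)"
  by (rule bounded_op_intro[where K="norm Y"]) (auto simp: clinear_op_def blinfun.add_right norm_blinfun)

lemma blinfun_clinear_bounded: "bounded_op f \<Longrightarrow> blinfun_apply (Blinfun f) = f"
  by (rule bounded_linear_Blinfun_apply[OF bounded_op_bounded_linear])

lemma norm_Blinfun_le: "bounded_op f \<Longrightarrow> (\<And>x. norm (f x) \<le> K * norm x) \<Longrightarrow> 0 \<le> K \<Longrightarrow> norm (Blinfun f) \<le> K"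
  by (rule norm_blinfun_bound) (auto simp: blinfun_clinear_bounded)

lemma aux_sq_le:
  fixes a b X :: real
  assumes "0 \<le> a" "0 \<le> X" "a * a \<le> (b * X) * (b * a)"
  shows "a \<le> b * b * X"
proof (cases "a = 0")
  case True thus ?thesis using assms by simp
next
  case False
  hence "a > 0" using assms by simp
  moreover have "a * a \<le> (b * b * X) * a" using assms(3) by (simp add: mult_ac)
  ultimately show ?thesis by (simp add: mult_le_cancel_right)
qed

lemma positive_norm_bound:
  assumes sB: "selfadjoint_op B" and pos: "\<And>x. 0 \<le> Re (cinner (B x) x)"
    and up: "\<And>x. Re (cinner (B x) x) \<le> \<beta> * (norm x)\<^sup>2" and \<beta>: "0 \<le> \<beta>"
  shows "norm (B x) \<le> \<beta> * norm x"
proof -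
  have bB: "bounded_op B" using sB by (simp add: selfadjoint_op_def)
  have cB: "clinear_op B" using bB by (rule bounded_op_clinear)
  have herm: "cinner (B u) v = cnj (cinner (B v) u)" for u v
  proof -
    have "cinner (B u) v = cinner u (B v)" by (rule selfadj_cinner[OF sB])
    also have "\<dots> = cnj (cinner (B v) u)" by (rule cinner_commute)
    finally show ?thesis .
  qed
  have cs: "(cmod (cinner (B x) (B x)))\<^sup>2 \<le> Re (cinner (B x) x) * Re (cinner (B (B x)) (B x))"
  proof (rule form_CS[where q="\<lambda>u v. cinner (B u) v"])
    show "cinner (B u) v = cnj (cinner (B v) u)" for u v by (rule herm)
    show "cinner (B (u + v)) w = cinner (B u) w + cinner (B v) w" for u v w
      using cB by (simp add: clinear_add cinner_add_left)
    show "cinner (B (scaleC a u)) v = cnj a * cinner (B u) v" for a u v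
      using cB by (simp add: clinear_scaleC cinner_scaleC_left)
    show "0 \<le> Re (cinner (B u) u)" for u by (rule pos)
  qed
  have m: "Re (cinner (B x) x) * Re (cinner (B (B x)) (B x)) \<le> (\<beta> * (norm x)\<^sup>2) * (\<beta> * (norm (B x))\<^sup>2)"
    by (rule mult_mono[OF up up _ pos]) (simp add: \<beta>)
  have e: "cmod (cinner (B x) (B x)) = (norm (B x))\<^sup>2"
    unfolding cinner_self_norm norm_of_real by simp
  have "(norm (B x))\<^sup>2 * (norm (B x))\<^sup>2 = (cmod (cinner (B x) (B x)))\<^sup>2"
    by (simp only: e power2_eq_square)
  also note cs
  also note m
  finally have h: "(norm (B x))\<^sup>2 * (norm (B x))\<^sup>2 \<le> (\<beta> * (norm x)\<^sup>2) * (\<beta> * (norm (B x))\<^sup>2)" .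
  have "(norm (B x))\<^sup>2 \<le> \<beta> * \<beta> * (norm x)\<^sup>2"
    by (rule aux_sq_le[of "(norm (B x))\<^sup>2" "(norm x)\<^sup>2" \<beta>, OF zero_le_power2 zero_le_power2 h])
  also have "\<dots> = (\<beta> * norm x)\<^sup>2" by (simp add: power2_eq_square)
  finally have "(norm (B x))\<^sup>2 \<le> (\<beta> * norm x)\<^sup>2" .
  thus ?thesis by (rule power2_le_imp_le) (simp add: \<beta>)
qed

lemma sqrt_op:
  fixes A :: "'a::chilbert_space \<Rightarrow> 'a"
  assumes sA: "selfadjoint_op A" and lo: "\<And>x. m * (norm x)\<^sup>2 \<le> Re (cinner (A x) x)"
    and up: "\<And>x. Re (cinner (A x) x) \<le> M * (norm x)\<^sup>2" and m: "0 < m" "m \<le> M"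
  shows "\<exists>D. selfadjoint_op D \<and> D \<circ> D = A \<and> (\<forall>X. bounded_op X \<and> X \<circ> A = A \<circ> X \<longrightarrow> X \<circ> D = D \<circ> X)"
proof -
  have Mpos: "M > 0" using m by simp
  have bA: "bounded_op A" and aA: "adj A = A" using sA by (auto simp: selfadjoint_op_def)
  have cA: "clinear_op A" using bA by (rule bounded_op_clinear)
  define b where "b x = x - (1/M) *\<^sub>R A x" for x
  have bb: "bounded_op b" unfolding b_def by (intro bounded_op_diff bounded_op_id' bounded_op_scaleR bA)
  have cb: "clinear_op b" using bb by (rule bounded_op_clinear)
  have sb: "selfadjoint_op b"
    unfolding selfadjoint_op_def b_def
    by (simp add: bounded_op_diff bounded_op_id' bounded_op_scaleR bA adj_diff adj_scaleR adj_id' aA)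
  define \<beta> where "\<beta> = 1 - m / M"
  have \<beta>: "0 \<le> \<beta>" "\<beta> < 1" using m Mpos by (auto simp: \<beta>_def field_simps)
  have Rb: "Re (cinner (b x) x) = (norm x)\<^sup>2 - Re (cinner (A x) x) / M" for x
    by (simp add: b_def cinner_diff_left cinner_scaleR_left cinner_self_Re)
  have normb: "norm (b x) \<le> \<beta> * norm x" for x
  proof (rule positive_norm_bound[OF sb _ _ \<beta>(1)])
    show "0 \<le> Re (cinner (b y) y)" for y
      using up[of y] Mpos by (simp add: Rb field_simps)
    show "Re (cinner (b y) y) \<le> \<beta> * (norm y)\<^sup>2" for y
      using lo[of y] Mpos by (simp add: Rb \<beta>_def field_simps)
  qed
  define \<rho> where "\<rho> = 1 - sqrt (1 - \<beta>)"
  have \<rho>: "0 \<le> \<rho>" "\<rho> < 1" using \<beta> by (auto simp: \<rho>_def)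
  have \<rho>eq: "(\<beta> + \<rho>\<^sup>2) / 2 = \<rho>"
  proof -
    define q where "q = sqrt (1 - \<beta>)"
    have h: "q * q = 1 - \<beta>" using \<beta> by (simp add: q_def)
    have "(\<beta> + (1 - q)\<^sup>2) / 2 = (\<beta> + q * q + 1 - 2 * q) / 2" by (simp add: power2_eq_square algebra_simps)
    also have "\<dots> = 1 - q" using h by simp
    finally show ?thesis unfolding \<rho>_def q_def[symmetric] .
  qed
  define S where "S = {Y :: 'a \<Rightarrow>\<^sub>L 'a. norm Y \<le> \<rho> \<and> clinear_op (blinfun_apply Y) \<and>
      (\<forall>X. bounded_op X \<and> X \<circ> b = b \<circ> X \<longrightarrow> X \<circ> blinfun_apply Y = blinfun_apply Y \<circ> X)}"
  define F where "F Y = Blinfun (\<lambda>x. (1/2) *\<^sub>R (b x + Y (Y x)))" for Y :: "'a \<Rightarrow>\<^sub>L 'a"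
  have bF: "bounded_op (\<lambda>x. (1/2) *\<^sub>R (b x + Y (Y x)))" if "clinear_op (blinfun_apply Y)" for Y
  proof -
    have "bounded_op (blinfun_apply Y)" using that by (rule blinfun_bounded_op)
    hence "bounded_op (\<lambda>x. (1/2) *\<^sub>R (b x + (blinfun_apply Y \<circ> blinfun_apply Y) x))"
      by (intro bounded_op_scaleR bounded_op_add bb bounded_op_comp)
    thus ?thesis by simp
  qed
  have Fapp: "blinfun_apply (F Y) x = (1/2) *\<^sub>R (b x + Y (Y x))" if "clinear_op (blinfun_apply Y)" for Y x
    unfolding F_def using blinfun_clinear_bounded[OF bF[OF that]] by simp
  have Sb: "bounded_op (blinfun_apply Y)" if "Y \<in> S" for Y
    using that by (intro blinfun_bounded_op) (simp add: S_def)
  have Scomm: "Y (Z x) = Z (Y x)" if "Y \<in> S" "Z \<in> S" for Y Z x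
  proof -
    have "b \<circ> blinfun_apply Z = blinfun_apply Z \<circ> b" using that(2) bb by (auto simp: S_def)
    hence "blinfun_apply Z \<circ> blinfun_apply Y = blinfun_apply Y \<circ> blinfun_apply Z"
      using that(1) Sb[OF that(2)] by (auto simp: S_def)
    thus ?thesis by (metis comp_apply)
  qed
  have closedS: "closed S"
  proof (rule closed_sequential_limits[THEN iffD2], intro allI impI, elim conjE)
    fix Ys :: "nat \<Rightarrow> 'a \<Rightarrow>\<^sub>L 'a" and Y
    assume mem: "\<forall>n. Ys n \<in> S" and lim: "Ys \<longlonglongrightarrow> Y"
    have ap: "(\<lambda>n. Ys n v) \<longlonglongrightarrow> Y v" for v by (rule blinfun.tendsto[OF lim tendsto_const])
    have "norm Y \<le> \<rho>"
      by (rule LIMSEQ_le_const2[OF tendsto_norm[OF lim]]) (use mem in \<open>auto simp: S_def\<close>)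
    moreover have "clinear_op (blinfun_apply Y)"
      unfolding clinear_op_def
    proof (intro conjI allI)
      show "Y (x + y) = Y x + Y y" for x y by (simp add: blinfun.add_right)
      fix c x
      have "(\<lambda>n. Ys n (scaleC c x)) \<longlonglongrightarrow> Y (scaleC c x)" by (rule ap)
      moreover have "(\<lambda>n. Ys n (scaleC c x)) = (\<lambda>n. scaleC c (Ys n x))"
      proof
        fix n
        have "clinear_op (blinfun_apply (Ys n))" using mem by (simp add: S_def)
        thus "Ys n (scaleC c x) = scaleC c (Ys n x)" by (rule clinear_scaleC)
      qed
      moreover have "(\<lambda>n. scaleC c (Ys n x)) \<longlonglongrightarrow> scaleC c (Y x)"
        by (rule bounded_linear.tendsto[OF bounded_op_bounded_linear[OF bounded_op_scaleC[OF bounded_op_id']] ap, simplified])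
      ultimately show "Y (scaleC c x) = scaleC c (Y x)" by (metis LIMSEQ_unique)
    qed
    moreover have "X \<circ> blinfun_apply Y = blinfun_apply Y \<circ> X" if X: "bounded_op X" "X \<circ> b = b \<circ> X" for X
    proof
      fix v
      have "(\<lambda>n. X (Ys n v)) \<longlonglongrightarrow> X (Y v)"
        by (rule bounded_linear.tendsto[OF bounded_op_bounded_linear[OF X(1)] ap])
      moreover have "(\<lambda>n. X (Ys n v)) = (\<lambda>n. Ys n (X v))"
      proof
        fix n
        have "X \<circ> blinfun_apply (Ys n) = blinfun_apply (Ys n) \<circ> X" using mem X unfolding S_def by blast
        thus "X (Ys n v) = Ys n (X v)" by (metis comp_apply)
      qed
      moreover have "(\<lambda>n. Ys n (X v)) \<longlonglongrightarrow> Y (X v)" by (rule ap)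
      ultimately have "X (Y v) = Y (X v)" by (metis LIMSEQ_unique)
      thus "(X \<circ> blinfun_apply Y) v = (blinfun_apply Y \<circ> X) v" by simp
    qed
    ultimately show "Y \<in> S" by (simp add: S_def)
  qed
  have zeroS: "0 \<in> S"
  proof -
    have "X \<circ> blinfun_apply 0 = blinfun_apply 0 \<circ> X" if "bounded_op X" for X
      using clinear_zero[OF bounded_op_clinear[OF that]] by (auto simp: fun_eq_iff)
    thus ?thesis using \<rho> by (auto simp: S_def clinear_op_def)
  qed
  have FS: "F ` S \<subseteq> S"
  proof
    fix Z assume "Z \<in> F ` S"
    then obtain Y where Y: "Y \<in> S" and Z: "Z = F Y" by blast
    have cY: "clinear_op (blinfun_apply Y)" using Y by (simp add: S_def)
    have Zapp: "blinfun_apply Z = (\<lambda>x. (1/2) *\<^sub>R (b x + Y (Y x)))" using Fapp[OF cY] Z by auto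
    have "norm Z \<le> \<rho>"
    proof -
      have "norm (Y (Y x)) \<le> \<rho>\<^sup>2 * norm x" for x
      proof -
        have "norm (Y (Y x)) \<le> norm Y * norm (Y x)" by (rule norm_blinfun)
        also have "\<dots> \<le> \<rho> * (\<rho> * norm x)"
        proof -
          have nY: "norm Y \<le> \<rho>" using Y by (simp add: S_def)
          have "norm (Y x) \<le> norm Y * norm x" by (rule norm_blinfun)
          also have "\<dots> \<le> \<rho> * norm x" using nY by (rule mult_right_mono) simp
          finally have "norm (Y x) \<le> \<rho> * norm x" .
          thus ?thesis using nY \<rho> by (intro mult_mono) auto
        qed
        finally show ?thesis by (simp add: power2_eq_square mult.assoc)
      qed
      hence "norm ((1/2) *\<^sub>R (b x + Y (Y x))) \<le> ((\<beta> + \<rho>\<^sup>2)/2) * norm x" for x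
      proof -
        have "norm ((1/2) *\<^sub>R (b x + Y (Y x))) = (1/2) * norm (b x + Y (Y x))" by simp
        also have "\<dots> \<le> (1/2) * (norm (b x) + norm (Y (Y x)))"
          by (intro mult_left_mono norm_triangle_ineq) auto
        also have "\<dots> \<le> (1/2) * (\<beta> * norm x + \<rho>\<^sup>2 * norm x)"
          using normb[of x] \<open>norm (Y (Y x)) \<le> \<rho>\<^sup>2 * norm x\<close> by (intro mult_left_mono add_mono) auto
        also have "\<dots> = ((\<beta> + \<rho>\<^sup>2)/2) * norm x" by (simp add: algebra_simps)
        finally show ?thesis .
      qed
      hence "norm Z \<le> (\<beta> + \<rho>\<^sup>2)/2" using \<beta> by (intro norm_blinfun_bound) (auto simp: Zapp)
      thus ?thesis using \<rho>eq by simp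
    qed
    moreover have "clinear_op (blinfun_apply Z)"
      using bF[OF cY] bounded_op_clinear Zapp by metis
    moreover have "X \<circ> blinfun_apply Z = blinfun_apply Z \<circ> X" if X: "bounded_op X" "X \<circ> b = b \<circ> X" for X
    proof -
      have cX: "clinear_op X" using X(1) by (rule bounded_op_clinear)
      have "X \<circ> blinfun_apply Y = blinfun_apply Y \<circ> X" using Y X by (auto simp: S_def)
      hence "X (Y v) = Y (X v)" for v by (metis comp_apply)
      moreover have "X (b v) = b (X v)" for v using X(2) by (metis comp_apply)
      ultimately show ?thesis using cX by (auto simp: Zapp fun_eq_iff clinear_scaleR clinear_add)
    qed
    ultimately show "Z \<in> S" by (simp add: S_def)
  qed
  have lip: "dist (F Y) (F Z) \<le> \<rho> * dist Y Z" if "Y \<in> S" "Z \<in> S" for Y Z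
  proof -
    have cY: "clinear_op (blinfun_apply Y)" and cZ: "clinear_op (blinfun_apply Z)" using that by (auto simp: S_def)
    have nY: "norm Y \<le> \<rho>" and nZ: "norm Z \<le> \<rho>" using that by (auto simp: S_def)
    have "norm (F Y - F Z) \<le> \<rho> * norm (Y - Z)"
    proof (rule norm_blinfun_bound)
      show "0 \<le> \<rho> * norm (Y - Z)" using \<rho> by simp
      fix x
      have "blinfun_apply (F Y - F Z) x = (1/2) *\<^sub>R (Y (Y x) - Z (Z x))"
        by (simp add: minus_blinfun.rep_eq Fapp[OF cY] Fapp[OF cZ] algebra_simps)
      also have "Y (Y x) - Z (Z x) = Y ((Y - Z) x) + Z ((Y - Z) x)"
        using Scomm[OF that, of x] by (simp add: blinfun.diff_left blinfun.diff_right)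
      finally have "norm (blinfun_apply (F Y - F Z) x) = (1/2) * norm (Y ((Y - Z) x) + Z ((Y - Z) x))"
        by simp
      also have "\<dots> \<le> (1/2) * (norm Y * norm ((Y - Z) x) + norm Z * norm ((Y - Z) x))"
        by (intro mult_left_mono order_trans[OF norm_triangle_ineq] add_mono norm_blinfun) auto
      also have "\<dots> \<le> (1/2) * (\<rho> * norm ((Y - Z) x) + \<rho> * norm ((Y - Z) x))"
        using nY nZ by (intro mult_left_mono add_mono mult_right_mono) auto
      also have "\<dots> = \<rho> * norm ((Y - Z) x)" by simp
      also have "\<dots> \<le> \<rho> * (norm (Y - Z) * norm x)" using \<rho> by (intro mult_left_mono norm_blinfun) auto
      finally show "norm (blinfun_apply (F Y - F Z) x) \<le> \<rho> * norm (Y - Z) * norm x" by (simp add: mult.assoc)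
    qed
    thus ?thesis by (simp add: dist_norm)
  qed
  have "\<exists>!Y\<in>S. F Y = Y"
    by (rule Banach_fix[OF _ _ \<rho> FS lip]) (use closedS zeroS complete_eq_closed in auto)
  then obtain Y0 where Y0: "Y0 \<in> S" "F Y0 = Y0" and uniq: "\<And>Y. Y \<in> S \<Longrightarrow> F Y = Y \<Longrightarrow> Y = Y0" by blast
  define y where "y = blinfun_apply Y0"
  have cy: "clinear_op y" using Y0 by (simp add: S_def y_def)
  have bdy: "bounded_op y" unfolding y_def using Y0(1) by (rule Sb)
  have yfix: "y x = (1/2) *\<^sub>R (b x + y (y x))" for x
    using Fapp[OF cy[unfolded y_def], of x] Y0(2) by (simp add: y_def)
  have ycomm: "X \<circ> y = y \<circ> X" if "bounded_op X" "X \<circ> b = b \<circ> X" for X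
    using Y0 that by (auto simp: S_def y_def)
  have ny: "norm (y x) \<le> \<rho> * norm x" for x
  proof -
    have "norm Y0 \<le> \<rho>" using Y0(1) by (simp add: S_def)
    hence "norm Y0 * norm x \<le> \<rho> * norm x" by (rule mult_right_mono) simp
    thus ?thesis using norm_blinfun[of Y0 x] unfolding y_def by linarith
  qed
  have yfun: "y = (\<lambda>x. (1/2) *\<^sub>R (b x + (y \<circ> y) x))" using yfix by (auto simp: fun_eq_iff)
  have ay: "adj y = (\<lambda>x. (1/2) *\<^sub>R (b x + (adj y \<circ> adj y) x))"
  proof -
    have "adj y = adj (\<lambda>x. (1/2) *\<^sub>R (b x + (y \<circ> y) x))" by (rule arg_cong[where f=adj, OF yfun])
    also have "\<dots> = (\<lambda>x. (1/2) *\<^sub>R (adj (\<lambda>x. b x + (y \<circ> y) x) x))"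
      by (rule adj_scaleR) (intro bounded_op_add bb bounded_op_comp bdy)
    also have "adj (\<lambda>x. b x + (y \<circ> y) x) = (\<lambda>x. adj b x + adj (y \<circ> y) x)"
      by (rule adj_add) (intro bb bounded_op_comp bdy)+
    also have "adj (y \<circ> y) = adj y \<circ> adj y" by (rule adj_comp[OF bdy bdy])
    also have "adj b = b" using sb by (simp add: selfadjoint_op_def)
    finally show ?thesis .
  qed
  have bay: "bounded_op (adj y)" using bdy by (rule adj_bounded)
  have "Blinfun (adj y) \<in> S"
  proof -
    have app: "blinfun_apply (Blinfun (adj y)) = adj y" by (rule blinfun_clinear_bounded[OF bay])
    have "norm (Blinfun (adj y)) \<le> \<rho>"
      by (rule norm_Blinfun_le[OF bay]) (use norm_adj_le[OF bdy ny] \<rho> in auto)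
    moreover have "X \<circ> adj y = adj y \<circ> X" if X: "bounded_op X" "X \<circ> b = b \<circ> X" for X
    proof -
      have bX: "bounded_op (adj X)" using X(1) by (rule adj_bounded)
      have "adj X \<circ> b = b \<circ> adj X"
      proof -
        have "adj (X \<circ> b) = adj (b \<circ> X)" using X(2) by simp
        hence "adj b \<circ> adj X = adj X \<circ> adj b" by (simp add: adj_comp X(1) bb)
        thus ?thesis using sb by (simp add: selfadjoint_op_def)
      qed
      hence "adj X \<circ> y = y \<circ> adj X" using ycomm bX by blast
      hence "adj (adj X \<circ> y) = adj (y \<circ> adj X)" by simp
      hence "adj y \<circ> adj (adj X) = adj (adj X) \<circ> adj y" by (simp add: adj_comp bX bdy)
      thus ?thesis by (simp add: adj_adj X(1))
    qed
    ultimately show ?thesis using bay by (simp add: S_def app bounded_op_clinear)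
  qed
  moreover have "F (Blinfun (adj y)) = Blinfun (adj y)"
  proof (rule blinfun_eqI)
    fix x
    have app: "blinfun_apply (Blinfun (adj y)) = adj y" by (rule blinfun_clinear_bounded[OF bay])
    have c: "clinear_op (blinfun_apply (Blinfun (adj y)))" using bay by (simp add: app bounded_op_clinear)
    show "blinfun_apply (F (Blinfun (adj y))) x = blinfun_apply (Blinfun (adj y)) x"
      unfolding Fapp[OF c] app by (subst (3) ay) simp
  qed
  ultimately have "Blinfun (adj y) = Y0" by (rule uniq)
  hence "blinfun_apply (Blinfun (adj y)) = y" unfolding y_def by (rule arg_cong)
  hence yself: "adj y = y" unfolding blinfun_clinear_bounded[OF bay] .
  define D where "D x = sqrt M *\<^sub>R (x - y x)" for x
  have bD: "bounded_op D" unfolding D_def by (intro bounded_op_scaleR bounded_op_diff bounded_op_id' bdy)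
  have sD: "selfadjoint_op D"
  proof -
    have "adj D = (\<lambda>x. sqrt M *\<^sub>R adj (\<lambda>x. x - y x) x)"
      unfolding D_def by (rule adj_scaleR) (intro bounded_op_diff bounded_op_id' bdy)
    also have "adj (\<lambda>x. x - y x) = (\<lambda>x. x - y x)"
      by (subst adj_diff) (auto simp: bounded_op_id' bdy adj_id' yself)
    finally show ?thesis using bD by (simp add: selfadjoint_op_def D_def[abs_def])
  qed
  have DD: "D \<circ> D = A"
  proof
    fix x
    have e: "2 *\<^sub>R y x = b x + y (y x)"
    proof -
      have "2 *\<^sub>R y x = 2 *\<^sub>R ((1/2) *\<^sub>R (b x + y (y x)))"
        using yfix[of x] by (rule arg_cong[where f="\<lambda>v. 2 *\<^sub>R v"])
      also have "\<dots> = b x + y (y x)" by simp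
      finally show ?thesis .
    qed
    have yy: "y (y x) = 2 *\<^sub>R y x - b x" unfolding e by simp
    have "D (D x) = M *\<^sub>R (x - y x - y x + y (y x))"
      using Mpos cy by (simp add: D_def clinear_diff clinear_scaleR algebra_simps)
    also have "x - y x - y x + y (y x) = x - b x" unfolding yy by (simp add: scaleR_2)
    also have "x - b x = (1/M) *\<^sub>R A x" by (simp add: b_def)
    finally show "(D \<circ> D) x = A x" using Mpos by simp
  qed
  have Dcomm: "X \<circ> D = D \<circ> X" if X: "bounded_op X" "X \<circ> A = A \<circ> X" for X
  proof -
    have cX: "clinear_op X" using X(1) by (rule bounded_op_clinear)
    have XA: "X (A v) = A (X v)" for v using X(2) by (metis comp_apply)
    have "X \<circ> b = b \<circ> X" using cX by (auto simp: fun_eq_iff b_def clinear_diff clinear_scaleR XA)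
    hence "X \<circ> y = y \<circ> X" using ycomm X(1) by blast
    hence Xy: "X (y v) = y (X v)" for v by (metis comp_apply)
    show ?thesis using cX by (auto simp: fun_eq_iff D_def clinear_diff clinear_scaleR Xy)
  qed
  show ?thesis using sD DD Dcomm by blast
qed



lemma comp_eq_pointwise: "(f \<circ> g = h \<circ> k) \<longleftrightarrow> (\<forall>x. f (g x) = h (k x))"
  by (auto simp: fun_eq_iff)

lemma comp_id_pointwise: "(f \<circ> g = id) \<longleftrightarrow> (\<forall>x. f (g x) = x)"
  by (auto simp: fun_eq_iff)

lemma cinner_eq_norm_eq:
  assumes "cinner x x = cinner (y::'a::chilbert_space) y" shows "norm x = norm y"
proof -
  have "(norm x)\<^sup>2 = (norm y)\<^sup>2" using arg_cong[OF assms, of Re] by (simp only: cinner_self_Re)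
  thus ?thesis by (rule power2_eq_imp_eq) auto
qed

lemma unitary_isometry:
  assumes "unitary_op U" shows "norm (U x) = norm x" "norm (adj U x) = norm x"
proof -
  have bU: "bounded_op U" and a1: "\<And>x. adj U (U x) = x" and a2: "\<And>x. U (adj U x) = x"
    using assms by (auto simp: unitary_op_def comp_id_pointwise)
  have "cinner (U x) (U x) = cinner x x" by (simp add: adj_cinner[OF bU] a1)
  thus "norm (U x) = norm x" by (rule cinner_eq_norm_eq)
  have "cinner (adj U x) (adj U x) = cinner x x" by (simp add: adj_cinner'[OF bU] a2)
  thus "norm (adj U x) = norm x" by (rule cinner_eq_norm_eq)
qed

lemma onorm_scaled_bound:
  assumes "bounded_op T" "onorm (\<lambda>x. r *\<^sub>R T x) \<le> 1" "r > 0"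
  shows "r * norm (T x) \<le> norm x"
proof -
  have bl: "bounded_linear (\<lambda>x. r *\<^sub>R T x)"
    using bounded_op_bounded_linear[OF bounded_op_scaleR[OF assms(1)]] .
  have "norm (r *\<^sub>R T x) \<le> onorm (\<lambda>x. r *\<^sub>R T x) * norm x" by (rule onorm[OF bl])
  also have "\<dots> \<le> 1 * norm x" by (rule mult_right_mono[OF assms(2)]) simp
  finally show ?thesis using assms(3) by simp
qed

lemma single_polar:
  fixes T :: "'a::chilbert_space \<Rightarrow> 'a"
  assumes iT: "op_invertible T" and r: "0 < r" "r < 1"
    and nT: "\<And>x. r * norm (T x) \<le> norm x" and nS: "\<And>x. r * norm (inv T x) \<le> norm x"
  shows "\<exists>D E. selfadjoint_op D \<and> bounded_op E \<and> (\<forall>x. E (D x) = x) \<and> (\<forall>x. D (E x) = x)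
     \<and> (\<forall>x. D (D x) = adj T (T x))
     \<and> (\<forall>X. bounded_op X \<and> (\<forall>x. X (adj T (T x)) = adj T (T (X x))) \<longrightarrow> (\<forall>x. X (D x) = D (X x)))
     \<and> unitary_op (T \<circ> E) \<and> op_spectrum D \<subseteq> closure (annulus r)"
proof -
  obtain S where S: "bounded_op S" "S \<circ> T = id" "T \<circ> S = id" using iT op_invertible_def by blast
  have bT: "bounded_op T" using iT by (rule op_invertible_bounded)
  have invT: "inv T = S" by (rule op_invertible_inv[OF S(2,3)])
  have ST: "S (T x) = x" and TS: "T (S x) = x" for x using S by (auto simp: comp_id_pointwise)
  have nS': "r * norm (S x) \<le> norm x" for x using nS[of x] by (simp add: invT)
  have baT: "bounded_op (adj T)" and baS: "bounded_op (adj S)" using bT S(1) by (auto intro: adj_bounded)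
  have aST: "adj S (adj T x) = x" and aTS: "adj T (adj S x) = x" for x
    using adj_inverse[OF S(1) bT S(2,3)] by (auto simp: comp_id_pointwise)
  define A where "A = adj T \<circ> T"
  have bA: "bounded_op A" unfolding A_def by (rule bounded_op_comp[OF baT bT])
  have sA: "selfadjoint_op A"
    unfolding selfadjoint_op_def using bA by (simp add: A_def adj_comp baT bT adj_adj comp_assoc)
  have ReA: "Re (cinner (A x) x) = (norm (T x))\<^sup>2" for x
    by (simp add: A_def adj_cinner'[OF bT] cinner_self_Re)
  have lo: "r\<^sup>2 * (norm x)\<^sup>2 \<le> Re (cinner (A x) x)" for x
  proof -
    have "r * norm x = r * norm (S (T x))" by (simp add: ST)
    also have "\<dots> \<le> norm (T x)" by (rule nS')
    finally have "(r * norm x)\<^sup>2 \<le> (norm (T x))\<^sup>2" using r by (intro power_mono) auto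
    thus ?thesis by (simp add: ReA power_mult_distrib)
  qed
  have up: "Re (cinner (A x) x) \<le> (1 / r\<^sup>2) * (norm x)\<^sup>2" for x
  proof -
    have "norm (T x) \<le> norm x / r" using nT[of x] r by (simp add: field_simps)
    hence "(norm (T x))\<^sup>2 \<le> (norm x / r)\<^sup>2" by (intro power_mono) auto
    thus ?thesis by (simp add: ReA power_divide)
  qed
  have mM: "r\<^sup>2 \<le> 1 / r\<^sup>2"
  proof -
    have "r\<^sup>2 * r\<^sup>2 \<le> 1 * 1" using r by (intro mult_mono) (auto simp: power_le_one)
    thus ?thesis using r by (simp add: field_simps)
  qed
  obtain D where sD: "selfadjoint_op D" and DD: "D \<circ> D = A"
    and Dc: "\<And>X. bounded_op X \<Longrightarrow> X \<circ> A = A \<circ> X \<Longrightarrow> X \<circ> D = D \<circ> X"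
    using sqrt_op[OF sA lo up _ mM] r by auto
  have bD: "bounded_op D" using sD by (simp add: selfadjoint_op_def)
  have DDx: "D (D x) = adj T (T x)" for x using DD by (metis A_def comp_apply)
  have Dc': "X (D x) = D (X x)" if "bounded_op X" "\<forall>x. X (adj T (T x)) = adj T (T (X x))" for X x
  proof -
    have "X \<circ> A = A \<circ> X" using that(2) by (auto simp: A_def fun_eq_iff)
    hence "X \<circ> D = D \<circ> X" using Dc that(1) by blast
    thus ?thesis by (metis comp_apply)
  qed
  define Ai where "Ai = S \<circ> adj S"
  have bAi: "bounded_op Ai" unfolding Ai_def by (rule bounded_op_comp[OF S(1) baS])
  have AiA: "Ai (adj T (T x)) = x" for x by (simp add: Ai_def aST ST)
  have AAi: "adj T (T (Ai x)) = x" for x by (simp add: Ai_def aTS TS)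
  have AiD: "Ai (D x) = D (Ai x)" for x
    by (rule Dc'[OF bAi]) (simp add: AiA AAi)
  define E where "E = D \<circ> Ai"
  have bE: "bounded_op E" unfolding E_def by (rule bounded_op_comp[OF bD bAi])
  have ED: "E (D x) = x" for x
  proof -
    have "E (D x) = D (D (Ai x))" by (simp add: E_def AiD)
    also have "\<dots> = x" by (simp add: DDx AAi)
    finally show ?thesis .
  qed
  have DE: "D (E x) = x" for x by (simp add: E_def DDx AAi)
  have normD: "norm (D x) = norm (T x)" for x
  proof -
    have "cinner (D x) (D x) = cinner (T x) (T x)"
      by (simp add: selfadj_cinner[OF sD] DDx adj_cinner[OF bT, symmetric])
    thus ?thesis by (rule cinner_eq_norm_eq)
  qed
  define U where "U = T \<circ> E"
  have bU: "bounded_op U" unfolding U_def by (rule bounded_op_comp[OF bT bE])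
  have normU: "norm (U x) = norm x" for x
    using normD[of "E x"] by (simp add: U_def DE)
  have sE: "selfadjoint_op E"
    by (rule selfadj_inverse[OF sD bE]) (auto simp: comp_id_pointwise ED DE)
  have aE: "adj E = E" using sE by (simp add: selfadjoint_op_def)
  have EEi: "E (E x) = Ai x" for x
  proof -
    have "E (E x) = E (E (adj T (T (Ai x))))" by (simp add: AAi)
    also have "\<dots> = E (E (D (D (Ai x))))" by (simp add: DDx)
    also have "\<dots> = Ai x" by (simp add: ED)
    finally show ?thesis .
  qed
  have aU: "adj U = E \<circ> adj T" unfolding U_def by (simp add: adj_comp bT bE aE)
  have aU': "adj U y = E (adj T y)" for y by (simp add: aU)
  have UE: "U y = T (E y)" for y by (simp add: U_def)
  have uU: "unitary_op U"
    unfolding unitary_op_def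
  proof (intro conjI bU)
    show "adj U \<circ> U = id"
      unfolding comp_id_pointwise by (simp add: aU' UE DDx[symmetric] ED DE)
    show "U \<circ> adj U = id"
      unfolding comp_id_pointwise by (simp add: aU' UE EEi Ai_def TS aTS aST)
  qed
  have normDb: "norm (D x) \<le> (1/r) * norm x" for x
    using nT[of x] r by (simp add: normD field_simps)
  have normEb: "norm (E x) \<le> (1/r) * norm x" for x
  proof -
    have "E x = S (U x)" by (simp add: U_def ST)
    hence "r * norm (E x) \<le> norm (U x)" using nS'[of "U x"] by simp
    thus ?thesis using r by (simp add: normU field_simps)
  qed
  have spec: "op_spectrum D \<subseteq> closure (annulus r)"
  proof
    fix c assume c: "c \<in> op_spectrum D"
    have "r \<le> cmod c \<and> cmod c \<le> 1 / r"
    proof (rule ccontr)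
      assume "\<not> ?thesis"
      hence "cmod c > 1 / r \<or> cmod c < r" by auto
      hence "op_invertible (\<lambda>x. D x - scaleC c x)"
      proof
        assume h: "cmod c > 1 / r"
        show ?thesis by (rule spec_outside[OF bD normDb _ h]) (use r in simp)
      next
        assume cr: "cmod c < r"
        have iD: "op_invertible D"
          by (rule op_invertible_intro[OF bD bE]) (auto simp: comp_id_pointwise ED DE)
        show ?thesis
        proof (rule spec_inside[OF iD _ _ bE normEb])
          show "E \<circ> D = id" "D \<circ> E = id" by (auto simp: comp_id_pointwise ED DE)
          show "0 \<le> 1 / r" using r by simp
          show "cmod c * (1 / r) < 1" using cr r by (simp add: field_simps)
        qed
      qed
      thus False using c by (simp add: op_spectrum_def)
    qed
    thus "c \<in> closure (annulus r)" using closed_annulus_sub[OF r] by auto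
  qed
  have uU': "unitary_op (T \<circ> E)" using uU by (simp add: U_def)
  have Dc'': "\<forall>X. bounded_op X \<and> (\<forall>x. X (adj T (T x)) = adj T (T (X x))) \<longrightarrow> (\<forall>x. X (D x) = D (X x))"
    using Dc' by blast
  show ?thesis using sD bE ED DE DDx Dc'' uU' spec by blast
qed



lemma inverse_commute:
  assumes "\<And>y. X (D y) = D (X y)" "\<And>y. E (D y) = y" "\<And>y. D (E y) = y"
  shows "X (E y) = E (X y)"
proof -
  have "X (E y) = E (D (X (E y)))" by (simp add: assms(2))
  also have "\<dots> = E (X (D (E y)))" by (simp add: assms(1))
  also have "\<dots> = E (X y)" by (simp add: assms(3))
  finally show ?thesis .
qed

lemma reverse_single:
  fixes U D :: "'a::chilbert_space \<Rightarrow> 'a"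
  assumes r: "0 < r" "r < 1" and uU: "unitary_op U" and sD: "selfadjoint_op D"
    and spec: "op_spectrum D \<subseteq> closure (annulus r)" and iT: "op_invertible (U \<circ> D)"
  shows "U \<circ> D \<in> QA r"
proof -
  have bD: "bounded_op D" using sD by (simp add: selfadjoint_op_def)
  have cD: "clinear_op D" using bD by (rule bounded_op_clinear)
  have bU: "bounded_op U" using uU by (simp add: unitary_op_def)
  have specb: "op_invertible (\<lambda>x. D x - scaleC c x)" if "cmod c > 1/r \<or> cmod c < r" for c
  proof (rule ccontr)
    assume "\<not> ?thesis"
    hence "c \<in> closure (annulus r)" using spec by (auto simp: op_spectrum_def)
    thus False using closure_annulus_sub[of r] that by auto
  qed
  have "op_invertible (\<lambda>x. D x - scaleC 0 x)" using r by (intro specb) simp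
  hence iD: "op_invertible D" by simp
  obtain E where E: "bounded_op E" "E \<circ> D = id" "D \<circ> E = id" using iD op_invertible_def by blast
  have ED: "E (D x) = x" and DE: "D (E x) = x" for x using E by (auto simp: comp_id_pointwise)
  have cE: "clinear_op E" using E(1) by (rule bounded_op_clinear)
  have sE: "selfadjoint_op E" by (rule selfadj_inverse[OF sD E])
  have iE: "op_invertible E" by (rule op_invertible_intro[OF E(1) bD E(3) E(2)])
  have normD: "norm (D x) \<le> (1/r) * norm x" for x
    by (rule selfadj_norm_bound[OF sD]) (use r specb in auto)
  have normE: "norm (E x) \<le> (1/r) * norm x" for x
  proof (rule selfadj_norm_bound[OF sE])
    show "0 \<le> 1 / r" using r by simp
    fix c :: complex assume c: "1 / r < cmod c"
    hence c0: "c \<noteq> 0" using r by (auto)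
    have "cmod (1 / c) < r" using c r c0 by (simp add: norm_divide field_simps)
    hence "op_invertible (\<lambda>x. D x - scaleC (1 / c) x)" by (intro specb) simp
    hence "op_invertible (E \<circ> (\<lambda>x. D x - scaleC (1 / c) x))" using iE by (intro op_invertible_comp)
    hence "op_invertible (\<lambda>x. scaleC (-c) ((E \<circ> (\<lambda>x. D x - scaleC (1 / c) x)) x))"
      by (rule op_invertible_scaleC) (use c0 in auto)
    moreover have "(\<lambda>x. scaleC (-c) ((E \<circ> (\<lambda>x. D x - scaleC (1 / c) x)) x)) = (\<lambda>x. E x - scaleC c x)"
    proof
      fix x
      have "scaleC (-c) (E (D x - scaleC (1 / c) x)) = scaleC (-c) (x - scaleC (1/c) (E x))"
        using cE by (simp add: clinear_diff clinear_scaleC ED)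
      also have "\<dots> = E x - scaleC c x"
        using c0 by (simp add: scaleC_diff_right scaleC_scaleC scaleC_minus_left scaleC_one)
      finally show "scaleC (-c) ((E \<circ> (\<lambda>x. D x - scaleC (1 / c) x)) x) = E x - scaleC c x" by simp
    qed
    ultimately show "op_invertible (\<lambda>x. E x - scaleC c x)" by simp
  qed
  have aU1: "adj U (U x) = x" and aU2: "U (adj U x) = x" for x
    using uU by (auto simp: unitary_op_def comp_id_pointwise)
  have invT: "inv (U \<circ> D) = E \<circ> adj U"
    by (rule op_invertible_inv) (auto simp: comp_id_pointwise aU1 aU2 ED DE)
  have b1: "onorm (\<lambda>x. r *\<^sub>R (U \<circ> D) x) \<le> 1"
  proof (rule onorm_le')
    fix x
    have "norm (r *\<^sub>R (U \<circ> D) x) = r * norm (D x)" using r by (simp add: unitary_isometry[OF uU])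
    also have "\<dots> \<le> r * ((1/r) * norm x)" using r normD[of x] by (intro mult_left_mono) auto
    also have "\<dots> = 1 * norm x" using r by simp
    finally show "norm (r *\<^sub>R (U \<circ> D) x) \<le> 1 * norm x" .
  qed simp
  have b2: "onorm (\<lambda>x. r *\<^sub>R inv (U \<circ> D) x) \<le> 1"
  proof (rule onorm_le')
    fix x
    have "norm (r *\<^sub>R inv (U \<circ> D) x) = r * norm (E (adj U x))" using r by (simp add: invT)
    also have "\<dots> \<le> r * ((1/r) * norm (adj U x))" using r normE[of "adj U x"] by (intro mult_left_mono) auto
    also have "\<dots> = 1 * norm x" using r by (simp add: unitary_isometry[OF uU])
    finally show "norm (r *\<^sub>R inv (U \<circ> D) x) \<le> 1 * norm x" .
  qed simp
  show ?thesis using iT b1 b2 by (simp add: QA_def)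
qed



theorem theorem3p10:
  fixes r :: real and d :: nat and T :: "nat \<Rightarrow> ('a::chilbert_space \<Rightarrow> 'a)"
  assumes "0 < r" and "r < 1"
    and "\<forall>j\<in>{1..d}. op_invertible (T j)"
  shows "(doubly_commuting d T \<and> (\<forall>j\<in>{1..d}. T j \<in> QA r)) \<longleftrightarrow>
    (\<exists>U D :: nat \<Rightarrow> ('a \<Rightarrow> 'a).
       (\<forall>j\<in>{1..d}. unitary_op (U j)) \<and> commuting_tuple d U \<and>
       (\<forall>j\<in>{1..d}. selfadjoint_op (D j)) \<and> commuting_tuple d D \<and>
       (\<forall>j\<in>{1..d}. op_spectrum (D j) \<subseteq> closure (annulus r)) \<and>
       (\<forall>i\<in>{1..d}. \<forall>j\<in>{1..d}. i \<noteq> j \<longrightarrow> D i \<circ> U j = U j \<circ> D i) \<and>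
       (\<forall>j\<in>{1..d}. T j = U j \<circ> D j))"
proof
  have r: "0 < r" "r < 1" using assms(1,2) by auto
  have iT: "\<And>j. j \<in> {1..d} \<Longrightarrow> op_invertible (T j)" using assms(3) by blast
  have bT: "\<And>j. j \<in> {1..d} \<Longrightarrow> bounded_op (T j)" using iT op_invertible_bounded by blast
  {
    assume L: "doubly_commuting d T \<and> (\<forall>j\<in>{1..d}. T j \<in> QA r)"
    have tc: "T i (T j x) = T j (T i x)" if "i \<in> {1..d}" "j \<in> {1..d}" for i j x
      using L that unfolding doubly_commuting_def commuting_tuple_def comp_eq_pointwise by blast
    have ta: "T i (adj (T j) x) = adj (T j) (T i x)" if "i \<in> {1..d}" "j \<in> {1..d}" "i \<noteq> j" for i j x
      using L that unfolding doubly_commuting_def comp_eq_pointwise by blast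
    have aa: "adj (T i) (adj (T j) x) = adj (T j) (adj (T i) x)" if "i \<in> {1..d}" "j \<in> {1..d}" for i j x
    proof -
      have "T j \<circ> T i = T i \<circ> T j" using tc[OF that(2,1)] by (auto simp: fun_eq_iff)
      hence "adj (T j \<circ> T i) = adj (T i \<circ> T j)" by simp
      moreover have "adj (T j \<circ> T i) = adj (T i) \<circ> adj (T j)" by (rule adj_comp[OF bT[OF that(2)] bT[OF that(1)]])
      moreover have "adj (T i \<circ> T j) = adj (T j) \<circ> adj (T i)" by (rule adj_comp[OF bT[OF that(1)] bT[OF that(2)]])
      ultimately have "adj (T i) \<circ> adj (T j) = adj (T j) \<circ> adj (T i)" by simp
      thus ?thesis by (metis comp_apply)
    qed
    define Q where "Q j Dj Ej \<longleftrightarrow> selfadjoint_op Dj \<and> bounded_op Ej \<and> (\<forall>x. Ej (Dj x) = x) \<and> (\<forall>x. Dj (Ej x) = x)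
     \<and> (\<forall>x. Dj (Dj x) = adj (T j) (T j x))
     \<and> (\<forall>X. bounded_op X \<and> (\<forall>x. X (adj (T j) (T j x)) = adj (T j) (T j (X x))) \<longrightarrow> (\<forall>x. X (Dj x) = Dj (X x)))
     \<and> unitary_op (T j \<circ> Ej) \<and> op_spectrum Dj \<subseteq> closure (annulus r)" for j Dj Ej
    have ex: "\<exists>p. Q j (fst p) (snd p)" if j: "j \<in> {1..d}" for j
    proof -
      have qa: "T j \<in> QA r" using L j by blast
      obtain S where S: "bounded_op S" "S \<circ> T j = id" "T j \<circ> S = id" using iT[OF j] op_invertible_def by blast
      have invT: "inv (T j) = S" by (rule op_invertible_inv[OF S(2,3)])
      have nT: "r * norm (T j x) \<le> norm x" for x
        using onorm_scaled_bound[OF bT[OF j] _ r(1)] qa by (simp add: QA_def)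
      have nS: "r * norm (inv (T j) x) \<le> norm x" for x
        using onorm_scaled_bound[OF S(1) _ r(1)] qa by (simp add: QA_def invT)
      obtain Dj Ej where "Q j Dj Ej"
        using single_polar[OF iT[OF j] r nT nS] unfolding Q_def by blast
      thus ?thesis by (intro exI[of _ "(Dj, Ej)"]) simp
    qed
    have ex': "\<forall>j\<in>{1..d}. \<exists>p. Q j (fst p) (snd p)" using ex by blast
    obtain f where f: "\<forall>j\<in>{1..d}. Q j (fst (f j)) (snd (f j))" using bchoice[OF ex'] by blast
    define Df where "Df j = fst (f j)" for j
    define Ef where "Ef j = snd (f j)" for j
    have Qj: "Q j (Df j) (Ef j)" if "j \<in> {1..d}" for j using f that by (simp add: Df_def Ef_def)
    have sD: "selfadjoint_op (Df j)" if "j \<in> {1..d}" for j using Qj[OF that] by (simp add: Q_def)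
    have bD: "bounded_op (Df j)" if "j \<in> {1..d}" for j using sD[OF that] by (simp add: selfadjoint_op_def)
    have ED: "Ef j (Df j x) = x" if "j \<in> {1..d}" for j x using Qj[OF that] by (simp add: Q_def)
    have DE: "Df j (Ef j x) = x" if "j \<in> {1..d}" for j x using Qj[OF that] by (simp add: Q_def)
    have Dc: "X (Df j x) = Df j (X x)"
      if "j \<in> {1..d}" "bounded_op X" "\<And>x. X (adj (T j) (T j x)) = adj (T j) (T j (X x))" for j X x
      using Qj[OF that(1)] that(2,3) unfolding Q_def by blast
    have uU: "unitary_op (T j \<circ> Ef j)" if "j \<in> {1..d}" for j using Qj[OF that] by (simp add: Q_def)
    have spec: "op_spectrum (Df j) \<subseteq> closure (annulus r)" if "j \<in> {1..d}" for j
      using Qj[OF that] by (simp add: Q_def)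
    have pair: "Df i (T j x) = T j (Df i x) \<and> Df i (Df j x) = Df j (Df i x) \<and> Df i (Ef j x) = Ef j (Df i x)
        \<and> Ef i (T j x) = T j (Ef i x) \<and> Ef i (Ef j x) = Ef j (Ef i x)"
      if ij: "i \<in> {1..d}" "j \<in> {1..d}" "i \<noteq> j" for i j x
    proof -
      have TA: "T j (adj (T i) (T i y)) = adj (T i) (T i (T j y))" for y
      proof -
        have "T j (adj (T i) (T i y)) = adj (T i) (T j (T i y))" using ta[OF ij(2,1)] ij by simp
        also have "\<dots> = adj (T i) (T i (T j y))" using tc[OF ij(2,1)] by simp
        finally show ?thesis .
      qed
      have DT: "T j (Df i y) = Df i (T j y)" for y by (rule Dc[OF ij(1) bT[OF ij(2)] TA])
      have aTA: "adj (T j) (adj (T i) (T i y)) = adj (T i) (T i (adj (T j) y))" for y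
      proof -
        have "adj (T j) (adj (T i) (T i y)) = adj (T i) (adj (T j) (T i y))" using aa[OF ij(2,1)] by simp
        also have "\<dots> = adj (T i) (T i (adj (T j) y))" using ta[OF ij] by simp
        finally show ?thesis .
      qed
      have bAj: "bounded_op (\<lambda>y. adj (T j) (T j y))"
        using bounded_op_comp[OF adj_bounded[OF bT[OF ij(2)]] bT[OF ij(2)]] by (simp add: comp_def)
      have AA: "adj (T j) (T j (adj (T i) (T i y))) = adj (T i) (T i (adj (T j) (T j y)))" for y
        by (simp add: TA aTA)
      have AjD: "adj (T j) (T j (Df i y)) = Df i (adj (T j) (T j y))" for y
        by (rule Dc[OF ij(1) bAj AA])
      have DD: "Df i (Df j y) = Df j (Df i y)" for y
        by (rule Dc[OF ij(2) bD[OF ij(1)]]) (simp add: AjD)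
      have DEj: "Df i (Ef j y) = Ef j (Df i y)" for y
        by (rule inverse_commute[where D="Df j"]) (simp_all add: DD ED[OF ij(2)] DE[OF ij(2)])
      have ET: "T j (Ef i y) = Ef i (T j y)" for y
        by (rule inverse_commute[where D="Df i"]) (simp_all add: DT ED[OF ij(1)] DE[OF ij(1)])
      have DjEi: "Df j (Ef i y) = Ef i (Df j y)" for y
        by (rule inverse_commute[where D="Df i"]) (simp_all add: DD ED[OF ij(1)] DE[OF ij(1)])
      have EE: "Ef i (Ef j y) = Ef j (Ef i y)" for y
        by (rule inverse_commute[where D="Df j"]) (simp_all add: DjEi[symmetric] ED[OF ij(2)] DE[OF ij(2)])
      show ?thesis using DT DD DEj ET EE by simp
    qed
    have big: "(\<forall>j\<in>{1..d}. unitary_op (T j \<circ> Ef j)) \<and> commuting_tuple d (\<lambda>j. T j \<circ> Ef j) \<and>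
       (\<forall>j\<in>{1..d}. selfadjoint_op (Df j)) \<and> commuting_tuple d Df \<and>
       (\<forall>j\<in>{1..d}. op_spectrum (Df j) \<subseteq> closure (annulus r)) \<and>
       (\<forall>i\<in>{1..d}. \<forall>j\<in>{1..d}. i \<noteq> j \<longrightarrow> Df i \<circ> (T j \<circ> Ef j) = (T j \<circ> Ef j) \<circ> Df i) \<and>
       (\<forall>j\<in>{1..d}. T j = (T j \<circ> Ef j) \<circ> Df j)"
    proof (intro conjI ballI impI)
      show "unitary_op (T j \<circ> Ef j)" if "j \<in> {1..d}" for j by (rule uU[OF that])
      show "selfadjoint_op (Df j)" if "j \<in> {1..d}" for j by (rule sD[OF that])
      show "op_spectrum (Df j) \<subseteq> closure (annulus r)" if "j \<in> {1..d}" for j by (rule spec[OF that])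
      show "commuting_tuple d (\<lambda>j. T j \<circ> Ef j)"
        unfolding commuting_tuple_def comp_eq_pointwise
      proof (intro ballI allI)
        fix i j x assume ij: "i \<in> {1..d}" "j \<in> {1..d}"
        show "(T i \<circ> Ef i) ((T j \<circ> Ef j) x) = (T j \<circ> Ef j) ((T i \<circ> Ef i) x)"
        proof (cases "i = j")
          case True thus ?thesis by simp
        next
          case False
          have "T i (Ef i (T j (Ef j x))) = T i (T j (Ef i (Ef j x)))" using pair[OF ij False] by simp
          also have "\<dots> = T j (T i (Ef j (Ef i x)))" using pair[OF ij False] tc[OF ij] by simp
          also have "\<dots> = T j (Ef j (T i (Ef i x)))" using pair[OF ij(2,1)] False by simp
          finally show ?thesis by simp
        qed
      qed
      show "commuting_tuple d Df"
        unfolding commuting_tuple_def comp_eq_pointwise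
      proof (intro ballI allI)
        fix i j x assume ij: "i \<in> {1..d}" "j \<in> {1..d}"
        show "Df i (Df j x) = Df j (Df i x)"
          by (cases "i = j") (use pair[OF ij] in auto)
      qed
      show "Df i \<circ> (T j \<circ> Ef j) = (T j \<circ> Ef j) \<circ> Df i" if "i \<in> {1..d}" "j \<in> {1..d}" "i \<noteq> j" for i j
        unfolding comp_eq_pointwise using pair[OF that] by simp
      show "T j = (T j \<circ> Ef j) \<circ> Df j" if "j \<in> {1..d}" for j
        using ED[OF that] by (simp add: fun_eq_iff)
    qed
    show "\<exists>U D :: nat \<Rightarrow> ('a \<Rightarrow> 'a).
       (\<forall>j\<in>{1..d}. unitary_op (U j)) \<and> commuting_tuple d U \<and>
       (\<forall>j\<in>{1..d}. selfadjoint_op (D j)) \<and> commuting_tuple d D \<and>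
       (\<forall>j\<in>{1..d}. op_spectrum (D j) \<subseteq> closure (annulus r)) \<and>
       (\<forall>i\<in>{1..d}. \<forall>j\<in>{1..d}. i \<noteq> j \<longrightarrow> D i \<circ> U j = U j \<circ> D i) \<and>
       (\<forall>j\<in>{1..d}. T j = U j \<circ> D j)"
      apply (rule exI[of _ "\<lambda>j. T j \<circ> Ef j"])
      apply (rule exI[of _ Df])
      by (rule big)
  }
  {
    assume "\<exists>U D :: nat \<Rightarrow> ('a \<Rightarrow> 'a).
       (\<forall>j\<in>{1..d}. unitary_op (U j)) \<and> commuting_tuple d U \<and>
       (\<forall>j\<in>{1..d}. selfadjoint_op (D j)) \<and> commuting_tuple d D \<and>
       (\<forall>j\<in>{1..d}. op_spectrum (D j) \<subseteq> closure (annulus r)) \<and>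
       (\<forall>i\<in>{1..d}. \<forall>j\<in>{1..d}. i \<noteq> j \<longrightarrow> D i \<circ> U j = U j \<circ> D i) \<and>
       (\<forall>j\<in>{1..d}. T j = U j \<circ> D j)"
    then obtain U D :: "nat \<Rightarrow> ('a \<Rightarrow> 'a)" where
      uU: "\<forall>j\<in>{1..d}. unitary_op (U j)" and cU: "commuting_tuple d U" and
      sD: "\<forall>j\<in>{1..d}. selfadjoint_op (D j)" and cD: "commuting_tuple d D" and
      spec: "\<forall>j\<in>{1..d}. op_spectrum (D j) \<subseteq> closure (annulus r)" and
      DU: "\<forall>i\<in>{1..d}. \<forall>j\<in>{1..d}. i \<noteq> j \<longrightarrow> D i \<circ> U j = U j \<circ> D i" and
      TUD: "\<forall>j\<in>{1..d}. T j = U j \<circ> D j" by blast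
    have qa: "\<forall>j\<in>{1..d}. T j \<in> QA r"
    proof
      fix j assume j: "j \<in> {1..d}"
      have "U j \<circ> D j \<in> QA r"
        by (rule reverse_single[OF r]) (use uU sD spec iT[OF j] TUD j in auto)
      thus "T j \<in> QA r" using TUD j by simp
    qed
    have bU: "bounded_op (U j)" if "j \<in> {1..d}" for j using uU that by (simp add: unitary_op_def)
    have bDj: "bounded_op (D j)" if "j \<in> {1..d}" for j using sD that by (simp add: selfadjoint_op_def)
    have aD: "adj (D j) = D j" if "j \<in> {1..d}" for j using sD that by (simp add: selfadjoint_op_def)
    have u1: "adj (U j) (U j x) = x" and u2: "U j (adj (U j) x) = x" if "j \<in> {1..d}" for j x
      using uU that by (auto simp: unitary_op_def comp_id_pointwise)
    have UU: "U i (U j x) = U j (U i x)" if "i \<in> {1..d}" "j \<in> {1..d}" for i j x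
      using cU that unfolding commuting_tuple_def comp_eq_pointwise by blast
    have DD: "D i (D j x) = D j (D i x)" if "i \<in> {1..d}" "j \<in> {1..d}" for i j x
      using cD that unfolding commuting_tuple_def comp_eq_pointwise by blast
    have DUp: "D i (U j x) = U j (D i x)" if "i \<in> {1..d}" "j \<in> {1..d}" "i \<noteq> j" for i j x
      using DU that unfolding comp_eq_pointwise by blast
    have Tp: "T j x = U j (D j x)" if "j \<in> {1..d}" for j x using TUD that by simp
    have aT: "adj (T j) x = D j (adj (U j) x)" if j: "j \<in> {1..d}" for j x
    proof -
      have "adj (T j) = adj (U j \<circ> D j)" using TUD j by simp
      also have "\<dots> = adj (D j) \<circ> adj (U j)" by (rule adj_comp[OF bU[OF j] bDj[OF j]])
      finally show ?thesis using aD[OF j] by simp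
    qed
    have aUD: "adj (U j) (D i y) = D i (adj (U j) y)" if ij: "i \<in> {1..d}" "j \<in> {1..d}" "i \<noteq> j" for i j y
    proof -
      have "adj (U j) (D i y) = adj (U j) (D i (U j (adj (U j) y)))" by (simp add: u2[OF ij(2)])
      also have "\<dots> = adj (U j) (U j (D i (adj (U j) y)))" by (simp add: DUp[OF ij])
      also have "\<dots> = D i (adj (U j) y)" by (simp add: u1[OF ij(2)])
      finally show ?thesis .
    qed
    have aUU: "adj (U j) (U i y) = U i (adj (U j) y)" if ij: "i \<in> {1..d}" "j \<in> {1..d}" for i j y
    proof -
      have "adj (U j) (U i y) = adj (U j) (U i (U j (adj (U j) y)))" by (simp add: u2[OF ij(2)])
      also have "\<dots> = adj (U j) (U j (U i (adj (U j) y)))" by (simp add: UU[OF ij])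
      also have "\<dots> = U i (adj (U j) y)" by (simp add: u1[OF ij(2)])
      finally show ?thesis .
    qed
    have "doubly_commuting d T"
      unfolding doubly_commuting_def commuting_tuple_def comp_eq_pointwise
    proof (intro conjI ballI allI impI)
      fix i j x assume ij: "i \<in> {1..d}" "j \<in> {1..d}"
      show "T i (T j x) = T j (T i x)"
      proof (cases "i = j")
        case True thus ?thesis by simp
      next
        case False
        have "T i (T j x) = U i (D i (U j (D j x)))" by (simp add: Tp[OF ij(1)] Tp[OF ij(2)])
        also have "\<dots> = U i (U j (D i (D j x)))" by (simp add: DUp[OF ij False])
        also have "\<dots> = U j (U i (D j (D i x)))" by (simp add: UU[OF ij] DD[OF ij])
        also have "\<dots> = U j (D j (U i (D i x)))" using DUp[OF ij(2,1)] False by simp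
        also have "\<dots> = T j (T i x)" by (simp add: Tp[OF ij(1)] Tp[OF ij(2)])
        finally show ?thesis .
      qed
    next
      fix i j x assume ij: "i \<in> {1..d}" "j \<in> {1..d}" and ne: "i \<noteq> j"
      have "T i (adj (T j) x) = U i (D i (D j (adj (U j) x)))" by (simp add: Tp[OF ij(1)] Tp[OF ij(2)] aT[OF ij(1)] aT[OF ij(2)])
      also have "\<dots> = U i (D j (D i (adj (U j) x)))" by (simp add: DD[OF ij])
      also have "\<dots> = D j (U i (D i (adj (U j) x)))" using DUp[OF ij(2,1)] ne by simp
      also have "\<dots> = D j (U i (adj (U j) (D i x)))" by (simp add: aUD[OF ij ne])
      also have "\<dots> = D j (adj (U j) (U i (D i x)))" by (simp add: aUU[OF ij])
      also have "\<dots> = adj (T j) (T i x)" by (simp add: Tp[OF ij(1)] Tp[OF ij(2)] aT[OF ij(1)] aT[OF ij(2)])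
      finally show "T i (adj (T j) x) = adj (T j) (T i x)" .
    qed
    thus "doubly_commuting d T \<and> (\<forall>j\<in>{1..d}. T j \<in> QA r)" using qa by blast
  }
qed


end
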